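(* Let $\eta_0$ be a covariance function on $\mathbb{R}$ with $\eta_0\in L^1([-1,1])$ and $\eta$ a generalized covariance function on $\mathbb{R}^\ell$ whose spectral measure $\nu$ satisfies $\int_{\mathbb{R}^\ell}\frac{\nu(d\xi)}{1+|\xi|^2}<\infty$. Then $\mathcal{E}(\eta_0,\eta)<\infty$. More precisely, if $R>0$ is such that $\|\eta_0\|_{L^1([-1,1])}(2\pi)^{-\ell}4\ell\int_{|\xi|>R}\frac{\nu(d\xi)}{|\xi|^2}<\frac12$, then $\mathcal{E}(\eta_0,\eta)\le\|\eta_0\|_{L^1([-1,1])}(2\pi)^{-\ell}\int_{|\xi|\le R}\nu(d\xi)$.
   Context: A covariance function on $\mathbb{R}$ is a nonnegative, nonnegative definite, locally integrable function. A generalized covariance function on $\mathbb{R}^\ell$ is a (generalized) function $\eta$ whose Fourier transform is a nonnegative tempered measure $\nu$ (its spectral measure), i.e. $\eta(x)=(2\pi)^{-\ell}\int e^{i\xi\cdot x}\nu(d\xi)$. Let $\mathcal{A}_\ell$ be the set of functions $g$ on $[0,1]\times\mathbb{R}^\ell$ with $g(s,\cdot)\in W^{1,2}(\mathbb{R}^\ell)$ and $\int g^2(s,x)dx=1$ for all $s\in[0,1]$. Define $$\mathcal{E}(\eta_0,\eta)=\sup_{g\in\mathcal{A}_\ell}\Big\{\int_{[0,1]^2}\int_{\mathbb{R}^{2\ell}}\eta(x-y)\eta_0(s-r)g^2(s,x)g^2(r,y)dxdydrds-\frac12\int_0^1\int_{\mathbb{R}^\ell}|\nabla_xg(s,x)|^2dxds\Big\},$$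 where the first integral is defined as $(2\pi)^{-\ell}\int_{[0,1]^2}\int_{\mathbb{R}^\ell}\mathcal{F}g^2(s,\cdot)(\xi)\overline{\mathcal{F}g^2(r,\cdot)(\xi)}\nu(d\xi)\eta_0(s-r)drds$, with $\mathcal{F}u(\xi)=\int e^{-i\xi\cdot x}u(x)dx$. *)

theory Defs
  imports "HOL-Analysis.Analysis"
begin

definition cc_fun_real :: "(real \<Rightarrow> complex) \<Rightarrow> bool" where
  "cc_fun_real \<phi> \<longleftrightarrow> continuous_on UNIV \<phi> \<and> bounded {t. \<phi> t \<noteq> 0}"

definition nonneg_definite :: "(real \<Rightarrow> real) \<Rightarrow> bool" where
  "nonneg_definite \<eta>0 \<longleftrightarrow>
     (\<forall>\<phi>. cc_fun_real \<phi> \<longrightarrow>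
        (let I = (\<integral>s. (\<integral>r. complex_of_real (\<eta>0 (s - r)) * \<phi> s * cnj (\<phi> r) \<partial>lborel) \<partial>lborel)
         in Im I = 0 \<and> Re I \<ge> 0))"

definition locally_integrable :: "(real \<Rightarrow> real) \<Rightarrow> bool" where
  "locally_integrable f \<longleftrightarrow> f \<in> borel_measurable lborel \<and>
     (\<forall>K. compact K \<longrightarrow> set_integrable lborel K f)"

definition covariance_function :: "(real \<Rightarrow> real) \<Rightarrow> bool" where
  "covariance_function \<eta>0 \<longleftrightarrow>
     (\<forall>t. \<eta>0 t \<ge> 0) \<and> nonneg_definite \<eta>0 \<and> locally_integrable \<eta>0"

definition C1c_test :: "('a::euclidean_space \<Rightarrow> real) \<Rightarrow> ('a \<Rightarrow> 'a \<Rightarrow> real) \<Rightarrow> bool" where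
  "C1c_test \<phi> D\<phi> \<longleftrightarrow> (\<forall>x. (\<phi> has_derivative D\<phi> x) (at x)) \<and>
     (\<forall>b\<in>Basis. continuous_on UNIV (\<lambda>x. D\<phi> x b)) \<and> bounded {x. \<phi> x \<noteq> 0}"

definition weak_gradient :: "('a::euclidean_space \<Rightarrow> real) \<Rightarrow> ('a \<Rightarrow> 'a) \<Rightarrow> bool" where
  "weak_gradient u G \<longleftrightarrow>
     (\<forall>\<phi> D\<phi> b. C1c_test \<phi> D\<phi> \<longrightarrow> b \<in> Basis \<longrightarrow>
        (\<integral>x. u x * D\<phi> x b \<partial>lborel) = - (\<integral>x. (G x \<bullet> b) * \<phi> x \<partial>lborel))"

definition W12_with_grad :: "('a::euclidean_space \<Rightarrow> real) \<Rightarrow> ('a \<Rightarrow> 'a) \<Rightarrow> bool" where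
  "W12_with_grad u G \<longleftrightarrow>
     u \<in> borel_measurable lborel \<and> integrable lborel (\<lambda>x. (u x)\<^sup>2) \<and>
     G \<in> borel_measurable lborel \<and> integrable lborel (\<lambda>x. (norm (G x))\<^sup>2) \<and>
     weak_gradient u G"

definition W12 :: "('a::euclidean_space \<Rightarrow> real) \<Rightarrow> bool" where
  "W12 u \<longleftrightarrow> (\<exists>G. W12_with_grad u G)"

text \<open>Pairs (g, grad_x g): g(s,.) in W^{1,2} with weak gradient G(s,.) and unit L^2 norm
  for every s in [0,1]; g and G jointly measurable and the Dirichlet term finite
  (needed for the integrals in the definition of E to make sense).\<close>
definition admissible :: "(real \<Rightarrow> 'a::euclidean_space \<Rightarrow> real) \<Rightarrow> (real \<Rightarrow> 'a \<Rightarrow> 'a) \<Rightarrow> bool" where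
  "admissible g G \<longleftrightarrow>
     (\<forall>s\<in>{0..1}. W12_with_grad (g s) (G s) \<and> (\<integral>x. (g s x)\<^sup>2 \<partial>lborel) = 1) \<and>
     (\<lambda>(s, x). g s x) \<in> borel_measurable (lborel \<Otimes>\<^sub>M lborel) \<and>
     (\<lambda>(s, x). G s x) \<in> borel_measurable (lborel \<Otimes>\<^sub>M lborel) \<and>
     (\<integral>\<^sup>+ s. indicator {0..1} s * (\<integral>\<^sup>+ x. ennreal ((norm (G s x))\<^sup>2) \<partial>lborel) \<partial>lborel) < \<infinity>"

definition fourier :: "('a::euclidean_space \<Rightarrow> real) \<Rightarrow> 'a \<Rightarrow> complex" where
  "fourier u \<xi> = (\<integral>x. cis (- (\<xi> \<bullet> x)) * complex_of_real (u x) \<partial>lborel)"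

text \<open>The interaction term, written through the spectral measure nu of eta.\<close>
definition interaction :: "(real \<Rightarrow> real) \<Rightarrow> 'a::euclidean_space measure \<Rightarrow> (real \<Rightarrow> 'a \<Rightarrow> real) \<Rightarrow> real" where
  "interaction \<eta>0 \<nu> g =
     (2 * pi) powi (- int DIM('a)) *
     Re (set_lebesgue_integral lborel {0..1} (\<lambda>s. set_lebesgue_integral lborel {0..1} (\<lambda>r.
           (\<integral>\<xi>. fourier (\<lambda>x. (g s x)\<^sup>2) \<xi> * cnj (fourier (\<lambda>x. (g r x)\<^sup>2) \<xi>) \<partial>\<nu>)
           * complex_of_real (\<eta>0 (s - r)))))"

definition dirichlet :: "(real \<Rightarrow> 'a::euclidean_space \<Rightarrow> 'a) \<Rightarrow> real" where
  "dirichlet G = set_lebesgue_integral lborel {0..1} (\<lambda>s. \<integral>x. (norm (G s x))\<^sup>2 \<partial>lborel)"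

definition calE :: "(real \<Rightarrow> real) \<Rightarrow> 'a::euclidean_space measure \<Rightarrow> ereal" where
  "calE \<eta>0 \<nu> = (SUP gG \<in> {(g, G). admissible g G}.
       ereal (interaction \<eta>0 \<nu> (fst gG) - 1/2 * dirichlet (snd gG)))"

text \<open>Spectral measures: nonnegative Borel measures on R^l (tempered).\<close>
definition tempered_measure :: "'a::euclidean_space measure \<Rightarrow> bool" where
  "tempered_measure \<nu> \<longleftrightarrow> sets \<nu> = sets borel \<and>
     (\<exists>k::nat. (\<integral>\<^sup>+ \<xi>. ennreal (1 / (1 + (norm \<xi>)\<^sup>2) ^ k) \<partial>\<nu>) < \<infinity>)"

end

theory Submission
  imports Defs
begin


definition qf :: "real \<Rightarrow> real" where "qf t = (max 0 t)^2"

lemma qf_deriv: "(qf has_real_derivative 2 * max 0 t) (at t)"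
proof (cases "t = 0")
  case True
  have "((\<lambda>h. (qf (0 + h) - qf 0) / h) \<longlongrightarrow> 0) (at 0)"
  proof (rule Lim_null_comparison)
    show "\<forall>\<^sub>F h in at 0. norm ((qf (0 + h) - qf 0) / h) \<le> norm h"
      by (auto simp: qf_def power2_eq_square abs_mult divide_simps max_def)
    show "((\<lambda>h::real. norm h) \<longlongrightarrow> 0) (at 0)"
      by (intro tendsto_eq_intros) auto
  qed
  then show ?thesis using True by (simp add: DERIV_def)
next
  case False
  show ?thesis
  proof (cases "t > 0")
    case True
    have d: "((\<lambda>x. x^2) has_real_derivative 2 * t) (at t)"
      by (auto intro!: derivative_eq_intros)
    show ?thesis
      apply (rule has_field_derivative_transform_within_open[where S="{0<..}", OF _ _ True[unfolded greaterThan_iff[symmetric]]])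
      using d True by (auto simp: qf_def)
  next
    case f2: False
    with False have tn: "t < 0" by auto
    have d: "((\<lambda>x. 0) has_real_derivative 0) (at t)"
      by (auto intro!: derivative_eq_intros)
    show ?thesis
      apply (rule has_field_derivative_transform_within_open[where S="{..<0}"])
      using d tn by (auto simp: qf_def)
  qed
qed

lemma qf_nonneg: "qf t \<ge> 0" by (simp add: qf_def)

lemma continuous_qf: "continuous_on UNIV qf"
  unfolding qf_def by (intro continuous_intros)

lemma rpf_C1:
  fixes p :: "'a::euclidean_space \<Rightarrow> real"
  assumes "real_polynomial_function p"
  shows "\<exists>Dp. (\<forall>x. (p has_derivative Dp x) (at x)) \<and> (\<forall>v. continuous_on UNIV (\<lambda>x. Dp x v))"
  using assms
proof (induction p rule: real_polynomial_function.induct)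
  case (linear f)
  then show ?case by (intro exI[of _ "\<lambda>x. f"]) (auto intro: bounded_linear_imp_has_derivative)
next
  case (const c)
  then show ?case by (intro exI[of _ "\<lambda>x h. 0"]) auto
next
  case (add f g)
  then obtain Df Dg where "\<forall>x. (f has_derivative Df x) (at x)" "\<forall>v. continuous_on UNIV (\<lambda>x. Df x v)"
    "\<forall>x. (g has_derivative Dg x) (at x)" "\<forall>v. continuous_on UNIV (\<lambda>x. Dg x v)" by blast
  then show ?case
    by (intro exI[of _ "\<lambda>x h. Df x h + Dg x h"]) (auto intro!: derivative_eq_intros continuous_intros)
next
  case (mult f g)
  then obtain Df Dg where D: "\<forall>x. (f has_derivative Df x) (at x)" "\<forall>v. continuous_on UNIV (\<lambda>x. Df x v)"
    "\<forall>x. (g has_derivative Dg x) (at x)" "\<forall>v. continuous_on UNIV (\<lambda>x. Dg x v)" by blast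
  have cf: "continuous_on UNIV f" "continuous_on UNIV g"
    using mult.hyps continuous_real_polymonial_function continuous_at_imp_continuous_on by blast+
  show ?case
    apply (intro exI[of _ "\<lambda>x h. f x * Dg x h + Df x h * g x"] conjI allI)
    using D apply (auto intro!: derivative_eq_intros)[1]
    using D cf by (auto intro!: continuous_intros)
qed


lemma psi_deriv:
  fixes x :: "'a::euclidean_space"
  shows "((\<lambda>x. qf (c - x \<bullet> x)) has_derivative (\<lambda>h. (-(h \<bullet> x + x \<bullet> h)) * (2 * max 0 (c - x \<bullet> x)))) (at x)"
  by (rule DERIV_compose_FDERIV[OF qf_deriv]) (auto intro!: derivative_eq_intros)

lemma ae_approx:
  fixes w :: "'a::euclidean_space \<Rightarrow> real"
  assumes wm: "w \<in> borel_measurable lborel" and wB: "\<And>x. \<bar>w x\<bar> \<le> B"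
    and wr: "\<And>x. norm x > r \<Longrightarrow> w x = 0" and r: "r \<ge> 0"
  obtains \<phi> D\<phi> where "\<And>k. C1c_test (\<phi> k) (D\<phi> k)" "\<And>k. continuous_on UNIV (\<phi> k)"
    "\<And>k x. \<bar>\<phi> k x\<bar> \<le> B + 1" "\<And>k x. norm x \<ge> r + 2 \<Longrightarrow> \<phi> k x = 0"
    "AE x in lebesgue. (\<lambda>k. \<phi> k x) \<longlonglongrightarrow> w x"
proof -
  have B: "B \<ge> 0" using wB[of 0] by linarith
  have "w \<in> borel_measurable lebesgue" using wm by (rule measurable_completion)
  then have "w measurable_on UNIV" by (rule lebesgue_measurable_imp_measurable_on) simp
  then obtain N g where N: "negligible N" and gc: "\<And>n. continuous_on UNIV (g n)"
    and gl: "\<And>x. x \<notin> N \<Longrightarrow> (\<lambda>n. g n x) \<longlonglongrightarrow> w x"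
    unfolding measurable_on_def by auto
  define chi where "chi x = max 0 (min 1 (r + 1 - norm x))" for x :: 'a
  define c where "c n x = max (-B) (min B (g n x)) * chi x" for n x
  have cc: "continuous_on UNIV (c n)" for n unfolding c_def chi_def by (intro continuous_intros gc)
  have chi01: "0 \<le> chi x" "chi x \<le> 1" for x unfolding chi_def by auto
  have cB: "\<bar>c n x\<bar> \<le> B" for n x
  proof -
    have "\<bar>max (-B) (min B (g n x))\<bar> \<le> B" using B by auto
    then have "\<bar>max (-B) (min B (g n x))\<bar> * \<bar>chi x\<bar> \<le> B * 1"
      using chi01[of x] B by (intro mult_mono) auto
    then show ?thesis by (simp add: c_def abs_mult)
  qed
  have c0: "norm x \<ge> r + 1 \<Longrightarrow> c n x = 0" for n x unfolding c_def chi_def by auto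
  have cl: "(\<lambda>n. c n x) \<longlonglongrightarrow> w x" if "x \<notin> N" for x
  proof -
    have "(\<lambda>n. max (-B) (min B (g n x)) * chi x) \<longlonglongrightarrow> max (-B) (min B (w x)) * chi x"
      by (intro tendsto_intros gl that)
    moreover have "max (-B) (min B (w x)) * chi x = w x"
    proof (cases "norm x > r")
      case True then show ?thesis using wr B by simp
    next
      case False then have "chi x = 1" unfolding chi_def by auto
      then show ?thesis using wB[of x] by auto
    qed
    ultimately show ?thesis unfolding c_def by simp
  qed
  define \<rho> where "\<rho> = r + 2"
  have \<rho>: "\<rho> > 0" "\<rho> > r + 1" using r by (auto simp: \<rho>_def)
  define psi where "psi x = qf (\<rho>\<^sup>2 - x \<bullet> x)" for x::'a
  have psic: "continuous_on UNIV psi" unfolding psi_def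
    by (intro continuous_on_compose2[OF continuous_qf] continuous_intros) auto
  have psi_pos: "psi x > 0" if "norm x < \<rho>" for x
  proof -
    have "x \<bullet> x < \<rho>\<^sup>2" using that norm_ge_zero[of x]
      by (metis power2_norm_eq_inner power_strict_mono zero_less_numeral)
    then show ?thesis unfolding psi_def qf_def by auto
  qed
  have psi0: "psi x = 0" if "norm x \<ge> \<rho>" for x
  proof -
    have "x \<bullet> x \<ge> \<rho>\<^sup>2" using that \<rho>
      by (metis less_imp_le power2_norm_eq_inner power_mono)
    then show ?thesis unfolding psi_def qf_def by auto
  qed
  have psi_le: "0 \<le> psi x \<and> psi x \<le> \<rho>^4" for x
  proof -
    have "0 \<le> max 0 (\<rho>\<^sup>2 - x \<bullet> x)" "max 0 (\<rho>\<^sup>2 - x \<bullet> x) \<le> \<rho>\<^sup>2" by auto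
    then have "(max 0 (\<rho>\<^sup>2 - x \<bullet> x))^2 \<le> (\<rho>\<^sup>2)^2" by (intro power_mono) auto
    then show ?thesis unfolding psi_def qf_def by (simp add: power_mult[symmetric])
  qed
  define h where "h n x = c n x / psi x" for n x
  have hc: "continuous_on UNIV (h n)" for n
  proof -
    have 1: "continuous_on (ball 0 \<rho>) (h n)" unfolding h_def
      using psi_pos by (intro continuous_intros continuous_on_subset[OF cc] continuous_on_subset[OF psic]) (auto, metis less_irrefl)
    have 2: "continuous_on (- cball 0 (r+1)) (h n)"
    proof (rule continuous_on_eq[OF continuous_on_const[of _ 0]])
      show "\<And>x. x \<in> - cball 0 (r + 1) \<Longrightarrow> 0 = h n x" unfolding h_def using c0 by auto
    qed
    have "ball 0 \<rho> \<union> (- cball 0 (r+1)) = UNIV" using \<rho> by auto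
    then show ?thesis using continuous_on_open_Un[OF open_ball _ 1 2] by (metis closed_cball open_Compl)
  qed
  define e where "e n = 1 / ((real n + 1) * (\<rho>^4 + 1))" for n
  have epos: "e n > 0" for n unfolding e_def using \<rho> by (intro divide_pos_pos mult_pos_pos) (auto simp: add_pos_nonneg)
  have "\<forall>n. \<exists>p. real_polynomial_function p \<and> (\<forall>x\<in>cball 0 \<rho>. \<bar>h n x - p x\<bar> < e n)"
  proof
    fix n
    obtain p where "real_polynomial_function p" "\<And>x. x \<in> cball 0 \<rho> \<Longrightarrow> \<bar>h n x - p x\<bar> < e n"
      using Stone_Weierstrass_real_polynomial_function[OF compact_cball continuous_on_subset[OF hc] epos] by blast
    then show "\<exists>p. real_polynomial_function p \<and> (\<forall>x\<in>cball 0 \<rho>. \<bar>h n x - p x\<bar> < e n)" by blast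
  qed
  then obtain P where P: "\<And>n. real_polynomial_function (P n)"
    "\<And>n x. x \<in> cball 0 \<rho> \<Longrightarrow> \<bar>h n x - P n x\<bar> < e n" by metis
  have "\<forall>n. \<exists>Dp. (\<forall>x. (P n has_derivative Dp x) (at x)) \<and> (\<forall>v. continuous_on UNIV (\<lambda>x. Dp x v))"
    using rpf_C1[OF P(1)] by blast
  then obtain DP where DP: "\<And>n x. (P n has_derivative DP n x) (at x)"
    "\<And>n v. continuous_on UNIV (\<lambda>x. DP n x v)" by metis
  have Pc: "continuous_on UNIV (P n)" for n
    using P(1) continuous_real_polymonial_function continuous_at_imp_continuous_on by blast
  define \<phi> where "\<phi> n x = psi x * P n x" for n x
  define D\<phi> where "D\<phi> n x v = psi x * DP n x v + (-(v \<bullet> x + x \<bullet> v)) * (2 * max 0 (\<rho>\<^sup>2 - x \<bullet> x)) * P n x" for n x v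
  have key: "\<bar>\<phi> n x - c n x\<bar> \<le> 1 / (real n + 1)" for n x
  proof (cases "norm x < \<rho>")
    case True
    have ps: "psi x > 0" using psi_pos True by auto
    then have "c n x = psi x * h n x" unfolding h_def by simp
    then have "\<bar>\<phi> n x - c n x\<bar> = psi x * \<bar>P n x - h n x\<bar>" unfolding \<phi>_def using ps
      by (simp add: abs_mult right_diff_distrib[symmetric])
    also have "\<dots> \<le> \<rho>^4 * e n"
      using P(2)[of x n] True psi_le[of x] by (intro mult_mono) auto
    also have "\<dots> \<le> 1 / (real n + 1)"
    proof -
      have p4: "\<rho>^4 \<ge> 0" by simp
      have "\<rho>^4 * e n = (\<rho>^4/(\<rho>^4+1)) * (1/(real n+1))" unfolding e_def by simp
      also have "\<dots> \<le> 1 * (1/(real n+1))"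
        using p4 by (intro mult_right_mono) (simp_all add: divide_le_eq not_less)
      finally show ?thesis by simp
    qed
    finally show ?thesis .
  next
    case False
    then show ?thesis using psi0[of x] c0[of x n] \<rho> unfolding \<phi>_def by auto
  qed
  show ?thesis
  proof (rule that[of \<phi> D\<phi>])
    fix k
    have "(\<phi> k has_derivative D\<phi> k x) (at x)" for x
      unfolding \<phi>_def D\<phi>_def psi_def
      by (rule derivative_eq_intros psi_deriv DP refl | simp add: algebra_simps)+
    moreover have "continuous_on UNIV (\<lambda>x. D\<phi> k x b)" for b
      unfolding D\<phi>_def by (intro continuous_intros psic DP Pc)
    moreover have "bounded {x. \<phi> k x \<noteq> 0}"
      by (rule bounded_subset[OF bounded_cball[of 0 \<rho>]]) (auto simp: \<phi>_def, metis psi0 nle_le)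
    ultimately show "C1c_test (\<phi> k) (D\<phi> k)" unfolding C1c_test_def by blast
    show "continuous_on UNIV (\<phi> k)" unfolding \<phi>_def by (intro continuous_intros psic Pc)
  next
    fix k and x :: 'a
    show "\<bar>\<phi> k x\<bar> \<le> B + 1"
    proof -
      have "1 / (real k + 1) \<le> 1" by (simp add: field_simps)
      then show ?thesis using key[of k x] cB[of k x] by linarith
    qed
  next
    fix k and x :: 'a assume "r + 2 \<le> norm x"
    then show "\<phi> k x = 0" using psi0 unfolding \<phi>_def \<rho>_def by auto
  next
    have "N \<in> null_sets lebesgue" using N negligible_iff_null_sets by blast
    then have "AE x in lebesgue. x \<notin> N" by (rule AE_not_in)
    then show "AE x in lebesgue. (\<lambda>k. \<phi> k x) \<longlonglongrightarrow> w x"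
    proof eventually_elim
      case (elim x)
      have "(\<lambda>n. \<phi> n x - c n x) \<longlonglongrightarrow> 0"
      proof (rule Lim_null_comparison)
        show "\<forall>\<^sub>F n in sequentially. norm (\<phi> n x - c n x) \<le> 1 / (real n + 1)" using key by simp
        show "(\<lambda>n. 1 / (real n + 1)) \<longlonglongrightarrow> 0" using LIMSEQ_inverse_real_of_nat
          by (simp add: inverse_eq_divide add.commute)
      qed
      from tendsto_add[OF cl[OF elim] this] show ?case by simp
    qed
  qed
qed


lemma abs_le_sq1: "\<bar>a::real\<bar> \<le> a^2 + 1"
proof -
  have "0 \<le> (\<bar>a\<bar> - 1)^2" by simp
  then have "2 * \<bar>a\<bar> \<le> \<bar>a\<bar>^2 + 1" by (simp add: power2_eq_square algebra_simps)
  then show ?thesis by simp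
qed

lemma L2_loc_integrable:
  fixes v :: "'a::euclidean_space \<Rightarrow> real"
  assumes vm: "v \<in> borel_measurable lborel" and vi: "integrable lborel (\<lambda>x. (v x)^2)"
    and fm: "f \<in> borel_measurable lborel" and fC: "\<And>x. \<bar>f x\<bar> \<le> C" and fR: "\<And>x. norm x > R \<Longrightarrow> f x = 0"
  shows "integrable lborel (\<lambda>x. v x * f x)"
proof (rule Bochner_Integration.integrable_bound)
  have C: "C \<ge> 0" using fC[of 0] by linarith
  show "integrable lborel (\<lambda>x. C * ((v x)^2 + indicator (cball 0 R) x))"
  proof -
    have "integrable lborel (\<lambda>x. (v x)^2 + indicator (cball 0 R) x)"
      by (intro Bochner_Integration.integrable_add vi integrable_real_indicator emeasure_bounded_finite) auto
    then show ?thesis by (rule integrable_mult_right)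
  qed
  show "(\<lambda>x. v x * f x) \<in> borel_measurable lborel" using vm fm by measurable
  show "AE x in lborel. norm (v x * f x) \<le> norm (C * ((v x)\<^sup>2 + indicator (cball 0 R) x))"
  proof (rule AE_I2)
    fix x
    show "norm (v x * f x) \<le> norm (C * ((v x)\<^sup>2 + indicator (cball 0 R) x))"
    proof (cases "norm x > R")
      case True then show ?thesis using fR by simp
    next
      case False
      have a: "\<bar>v x\<bar> \<le> (v x)^2 + 1" by (rule abs_le_sq1)
      have "\<bar>v x * f x\<bar> = \<bar>v x\<bar> * \<bar>f x\<bar>" by (simp add: abs_mult)
      also have "\<dots> \<le> ((v x)^2 + 1) * C" using a fC[of x] by (intro mult_mono) auto
      finally show ?thesis using False C by (simp add: mult.commute)
    qed
  qed
qed

lemma L2_duality: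
  fixes v :: "'a::euclidean_space \<Rightarrow> real"
  assumes vm: "v \<in> borel_measurable lborel" and vi: "integrable lborel (\<lambda>x. (v x)^2)" and M: "M \<ge> 0"
    and H: "\<And>\<phi> D\<phi>. C1c_test \<phi> D\<phi> \<Longrightarrow> continuous_on UNIV \<phi> \<Longrightarrow>
         (\<integral>x. v x * \<phi> x \<partial>lborel) \<le> M * sqrt (\<integral>x. (\<phi> x)^2 \<partial>lborel)"
  shows "(\<integral>x. (v x)^2 \<partial>lborel) \<le> M^2"
proof -
  have vm'[measurable]: "v \<in> borel_measurable borel" using vm by simp
  define w where "w n x = (if \<bar>v x\<bar> \<le> real n \<and> norm x \<le> real n then v x else 0)" for n x
  have wm[measurable]: "w n \<in> borel_measurable lborel" for n unfolding w_def using vm by measurable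
  have S_le: "(\<integral>x. (w n x)^2 \<partial>lborel) \<le> M^2" for n
  proof -
    obtain \<phi> D\<phi> where \<phi>: "\<And>k. C1c_test (\<phi> k) (D\<phi> k)" "\<And>k. continuous_on UNIV (\<phi> k)"
      "\<And>k x. \<bar>\<phi> k x\<bar> \<le> real n + 1" "\<And>k x. norm x \<ge> real n + 2 \<Longrightarrow> \<phi> k x = 0"
      "AE x in lebesgue. (\<lambda>k. \<phi> k x) \<longlonglongrightarrow> w n x"
      by (rule ae_approx[of "w n" "real n" "real n"]) (auto simp: w_def)
    define K where "K = cball (0::'a) (real n + 2)"
    have Km[measurable]: "K \<in> sets lborel" unfolding K_def by simp
    have Km'[measurable]: "K \<in> sets borel" unfolding K_def by simp
    have Kf: "emeasure lborel K < \<infinity>" unfolding K_def by (rule emeasure_bounded_finite) simp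
    have \<phi>m[measurable]: "\<phi> k \<in> borel_measurable lborel" for k
      using borel_measurable_continuous_onI[OF \<phi>(2)] by simp
    have \<phi>K: "\<phi> k x = \<phi> k x * indicator K x" for k x
      using \<phi>(4)[of x k] by (auto simp: K_def indicator_def)
    have wK: "\<bar>w n x\<bar> \<le> (real n + 1) * indicator K x" for x
      by (auto simp: w_def K_def indicator_def)
    have T1: "(\<lambda>k. \<integral>x. v x * \<phi> k x \<partial>lborel) \<longlonglongrightarrow> (\<integral>x. v x * w n x \<partial>lborel)"
    proof -
      have "(\<lambda>k. \<integral>x. v x * \<phi> k x \<partial>lebesgue) \<longlonglongrightarrow> (\<integral>x. v x * w n x \<partial>lebesgue)"
      proof (rule integral_dominated_convergence[where w="\<lambda>x. \<bar>v x\<bar> * ((real n + 1) * indicator K x)"])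
        show "(\<lambda>x. v x * w n x) \<in> borel_measurable lebesgue"
          by (rule measurable_completion) measurable
        show "(\<lambda>x. v x * \<phi> k x) \<in> borel_measurable lebesgue" for k
          by (rule measurable_completion) measurable
        have "integrable lborel (\<lambda>x. \<bar>v x\<bar> * ((real n + 1) * indicator K x))"
        proof -
          have "integrable lborel (\<lambda>x. v x * ((real n + 1) * indicator K x))"
            by (rule L2_loc_integrable[OF vm vi, where C="real n + 1" and R="real n + 2"])
               (auto simp: K_def indicator_def)
          then have "integrable lborel (\<lambda>x. \<bar>v x * ((real n + 1) * indicator K x)\<bar>)" by (rule integrable_abs)
          moreover have "\<bar>v x * ((real n + 1) * indicator K x)\<bar> = \<bar>v x\<bar> * ((real n + 1) * indicator K x)" for x
            by (simp add: abs_mult indicator_def)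
          ultimately show ?thesis by simp
        qed
        moreover have "(\<lambda>x. \<bar>v x\<bar> * ((real n + 1) * indicator K x)) \<in> borel_measurable lborel"
          by measurable
        ultimately show "integrable lebesgue (\<lambda>x. \<bar>v x\<bar> * ((real n + 1) * indicator K x))"
          using integrable_completion by blast
        show "AE x in lebesgue. (\<lambda>k. v x * \<phi> k x) \<longlonglongrightarrow> v x * w n x"
          using \<phi>(5) by eventually_elim (intro tendsto_intros)
        show "AE x in lebesgue. norm (v x * \<phi> k x) \<le> \<bar>v x\<bar> * ((real n + 1) * indicator K x)" for k
        proof (rule AE_I2)
          fix x
          have "\<bar>\<phi> k x\<bar> \<le> (real n + 1) * indicator K x"
            using \<phi>(3)[of k x] \<phi>K[of k x] by (cases "x \<in> K") auto
          then show "norm (v x * \<phi> k x) \<le> \<bar>v x\<bar> * ((real n + 1) * indicator K x)"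
            by (auto simp: abs_mult intro: mult_left_mono)
        qed
      qed
      moreover have "(\<integral>x. v x * \<phi> k x \<partial>lebesgue) = (\<integral>x. v x * \<phi> k x \<partial>lborel)" for k
        by (rule integral_completion) measurable
      moreover have "(\<integral>x. v x * w n x \<partial>lebesgue) = (\<integral>x. v x * w n x \<partial>lborel)"
        by (rule integral_completion) measurable
      ultimately show ?thesis by simp
    qed
    have T2: "(\<lambda>k. \<integral>x. (\<phi> k x)^2 \<partial>lborel) \<longlonglongrightarrow> (\<integral>x. (w n x)^2 \<partial>lborel)"
    proof -
      have "(\<lambda>k. \<integral>x. (\<phi> k x)^2 \<partial>lebesgue) \<longlonglongrightarrow> (\<integral>x. (w n x)^2 \<partial>lebesgue)"
      proof (rule integral_dominated_convergence[where w="\<lambda>x. (real n + 1)^2 * indicator K x"])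
        show "(\<lambda>x. (w n x)^2) \<in> borel_measurable lebesgue"
          by (rule measurable_completion) measurable
        show "(\<lambda>x. (\<phi> k x)^2) \<in> borel_measurable lebesgue" for k
          by (rule measurable_completion) measurable
        have "integrable lborel (\<lambda>x. (real n + 1)^2 * indicator K x)"
          using Km Kf by (intro integrable_mult_right integrable_real_indicator)
        moreover have "(\<lambda>x. (real n + 1)^2 * indicator K x) \<in> borel_measurable lborel"
          by measurable
        ultimately show "integrable lebesgue (\<lambda>x. (real n + 1)^2 * indicator K x)"
          using integrable_completion by blast
        show "AE x in lebesgue. (\<lambda>k. (\<phi> k x)^2) \<longlonglongrightarrow> (w n x)^2"
          using \<phi>(5) by eventually_elim (intro tendsto_intros)
        show "AE x in lebesgue. norm ((\<phi> k x)^2) \<le> (real n + 1)^2 * indicator K x" for k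
        proof (rule AE_I2)
          fix x
          have "\<bar>\<phi> k x\<bar> \<le> (real n + 1) * indicator K x"
            using \<phi>(3)[of k x] \<phi>K[of k x] by (cases "x \<in> K") auto
          then have "\<bar>\<phi> k x\<bar>^2 \<le> ((real n + 1) * indicator K x)^2"
            by (intro power_mono) auto
          then show "norm ((\<phi> k x)^2) \<le> (real n + 1)^2 * indicator K x"
            by (auto simp: power_mult_distrib indicator_def)
        qed
      qed
      moreover have "(\<integral>x. (\<phi> k x)^2 \<partial>lebesgue) = (\<integral>x. (\<phi> k x)^2 \<partial>lborel)" for k
        by (rule integral_completion) measurable
      moreover have "(\<integral>x. (w n x)^2 \<partial>lebesgue) = (\<integral>x. (w n x)^2 \<partial>lborel)"
        by (rule integral_completion) measurable
      ultimately show ?thesis by simp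
    qed
    have "(\<integral>x. v x * w n x \<partial>lborel) \<le> M * sqrt (\<integral>x. (w n x)^2 \<partial>lborel)"
      by (rule LIMSEQ_le[OF T1 tendsto_mult_left[OF tendsto_real_sqrt[OF T2]]])
         (use H \<phi>(1,2) in blast)
    moreover have "v x * w n x = (w n x)^2" for x by (simp add: w_def power2_eq_square)
    ultimately have le: "(\<integral>x. (w n x)^2 \<partial>lborel) \<le> M * sqrt (\<integral>x. (w n x)^2 \<partial>lborel)" by simp
    define S where "S = (\<integral>x. (w n x)^2 \<partial>lborel)"
    have S0: "S \<ge> 0" unfolding S_def by simp
    show ?thesis
    proof (cases "S = 0")
      case True then show ?thesis using M by (simp add: S_def)
    next
      case False
      then have "sqrt S > 0" using S0 by simp
      moreover have "sqrt S * sqrt S \<le> M * sqrt S" using le S0 unfolding S_def[symmetric] by simp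
      ultimately have "sqrt S \<le> M" by (metis mult_le_cancel_right_pos)
      then have "(sqrt S)^2 \<le> M^2" using S0 by (intro power_mono) auto
      then show ?thesis using S0 by (simp add: S_def)
    qed
  qed
  have "(\<lambda>n. \<integral>x. (w n x)^2 \<partial>lborel) \<longlonglongrightarrow> (\<integral>x. (v x)^2 \<partial>lborel)"
  proof (rule integral_dominated_convergence[where w="\<lambda>x. (v x)^2"])
    show "(\<lambda>x. (v x)^2) \<in> borel_measurable lborel" "(\<lambda>x. (w n x)^2) \<in> borel_measurable lborel" for n
      by measurable
    show "integrable lborel (\<lambda>x. (v x)^2)" by (rule vi)
    show "AE x in lborel. (\<lambda>n. (w n x)^2) \<longlonglongrightarrow> (v x)^2"
    proof (rule AE_I2)
      fix x
      obtain N where N: "real N \<ge> max \<bar>v x\<bar> (norm x)" using real_arch_simple by blast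
      have "eventually (\<lambda>n. (w n x)^2 = (v x)^2) sequentially"
        using eventually_ge_at_top[of N] 
      proof eventually_elim
        case (elim n) then have "real n \<ge> real N" by simp
        then show ?case using N by (auto simp: w_def)
      qed
      then show "(\<lambda>n. (w n x)^2) \<longlonglongrightarrow> (v x)^2" by (rule tendsto_eventually)
    qed
    show "AE x in lborel. norm ((w n x)^2) \<le> (v x)^2" for n
      by (rule AE_I2) (auto simp: w_def)
  qed
  then show ?thesis using S_le by (intro LIMSEQ_le_const2) auto
qed


lemma abs_integral_le:
  fixes f g :: "'b \<Rightarrow> real"
  assumes gi: "integrable M g" and fg: "AE x in M. \<bar>f x\<bar> \<le> g x"
  shows "\<bar>integral\<^sup>L M f\<bar> \<le> integral\<^sup>L M g"
proof (cases "integrable M f")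
  case True
  have "\<bar>integral\<^sup>L M f\<bar> \<le> (\<integral>x. \<bar>f x\<bar> \<partial>M)" by (rule integral_abs_bound)
  also have "\<dots> \<le> integral\<^sup>L M g" using True gi fg by (intro integral_mono_AE) auto
  finally show ?thesis .
next
  case False
  have "0 \<le> integral\<^sup>L M g" using fg by (intro integral_nonneg_AE) (auto elim: eventually_mono)
  then show ?thesis using False by (simp add: not_integrable_integral_eq)
qed

lemma int_shift:
  fixes f :: "'a::euclidean_space \<Rightarrow> 'b::{banach,second_countable_topology}"
  assumes [measurable]: "f \<in> borel_measurable borel"
  shows "(\<integral>x. f (x + h) \<partial>lborel) = (\<integral>x. f x \<partial>lborel)"
proof -
  have "(\<integral>x. f x \<partial>lborel) = (\<integral>x. f x \<partial>(distr lborel borel ((+) h)))" by (simp add: lborel_distr_plus)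
  also have "\<dots> = (\<integral>x. f (h + x) \<partial>lborel)" by (rule integral_distr) auto
  finally show ?thesis by (simp add: add.commute)
qed

lemma integrable_shift:
  fixes f :: "'a::euclidean_space \<Rightarrow> 'b::{banach,second_countable_topology}"
  assumes [measurable]: "f \<in> borel_measurable borel"
  shows "integrable lborel (\<lambda>x. f (x + h)) \<longleftrightarrow> integrable lborel f"
proof -
  have "integrable lborel f \<longleftrightarrow> integrable (distr lborel borel ((+) h)) f" by (simp add: lborel_distr_plus)
  also have "\<dots> \<longleftrightarrow> integrable lborel (\<lambda>x. f (h + x))" by (rule integrable_distr_eq) auto
  finally show ?thesis by (simp add: add.commute)
qed

lemma C1c_support:
  fixes \<phi> :: "'a::euclidean_space \<Rightarrow> real"
  assumes "C1c_test \<phi> D\<phi>"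
  obtains R where "R \<ge> 0" "\<And>x. norm x > R \<Longrightarrow> \<phi> x = 0" "\<And>x. norm x > R \<Longrightarrow> D\<phi> x = (\<lambda>h. 0)"
proof -
  from assms have d: "\<And>x. (\<phi> has_derivative D\<phi> x) (at x)" and b: "bounded {x. \<phi> x \<noteq> 0}"
    unfolding C1c_test_def by auto
  from b obtain R where R: "\<And>x. x \<in> {x. \<phi> x \<noteq> 0} \<Longrightarrow> norm x \<le> R" unfolding bounded_iff by blast
  define R' where "R' = max R 0"
  have z: "\<phi> x = 0" if "norm x > R'" for x using R[of x] that by (force simp: R'_def)
  show ?thesis
  proof (rule that[of R'])
    show "0 \<le> R'" by (simp add: R'_def)
    show "\<And>x. norm x > R' \<Longrightarrow> \<phi> x = 0" by (rule z)
    fix x :: 'a assume x: "norm x > R'"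
    have "((\<lambda>y. 0) has_derivative (\<lambda>h. 0)) (at x)" by simp
    then have "(\<phi> has_derivative (\<lambda>h. 0)) (at x)"
      by (rule has_derivative_transform_within_open[where s="{y. norm y > R'}"])
         (use x z in \<open>auto intro: open_Collect_less continuous_intros\<close>)
    then show "D\<phi> x = (\<lambda>h. 0)" using has_derivative_unique d by blast
  qed
qed

lemma C1c_bounded:
  assumes "C1c_test \<phi> D\<phi>" "b \<in> Basis"
  obtains C where "\<And>x. \<bar>D\<phi> x b\<bar> \<le> C" "\<And>x. \<bar>\<phi> x\<bar> \<le> C"
proof -
  obtain R where R: "R \<ge> 0" "\<And>x. norm x > R \<Longrightarrow> \<phi> x = 0" "\<And>x. norm x > R \<Longrightarrow> D\<phi> x = (\<lambda>h. 0)"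
    using C1c_support[OF assms(1)] by blast
  from assms have d: "\<And>x. (\<phi> has_derivative D\<phi> x) (at x)" and c: "continuous_on UNIV (\<lambda>x. D\<phi> x b)"
    unfolding C1c_test_def by auto
  have cp: "continuous_on UNIV \<phi>" using d has_derivative_continuous continuous_at_imp_continuous_on by blast
  have "bounded ((\<lambda>x. D\<phi> x b) ` cball 0 R)"
    by (intro compact_imp_bounded compact_continuous_image continuous_on_subset[OF c]) auto
  then obtain C1 where C1: "\<And>x. x \<in> cball 0 R \<Longrightarrow> \<bar>D\<phi> x b\<bar> \<le> C1" unfolding bounded_iff by fastforce
  have "bounded (\<phi> ` cball 0 R)"
    by (intro compact_imp_bounded compact_continuous_image continuous_on_subset[OF cp]) auto
  then obtain C2 where C2: "\<And>x. x \<in> cball 0 R \<Longrightarrow> \<bar>\<phi> x\<bar> \<le> C2" unfolding bounded_iff by fastforce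
  show ?thesis
  proof (rule that[of "max C1 C2"])
    fix x
    show "\<bar>D\<phi> x b\<bar> \<le> max C1 C2"
      using C1[of x] R(3)[of x] C1[of 0] R(1) by (cases "norm x > R") auto
    show "\<bar>\<phi> x\<bar> \<le> max C1 C2"
      using C2[of x] R(2)[of x] C2[of 0] R(1) by (cases "norm x > R") auto
  qed
qed

lemma C1c_continuous: "C1c_test \<phi> D\<phi> \<Longrightarrow> continuous_on UNIV \<phi>"
  unfolding C1c_test_def using has_derivative_continuous continuous_at_imp_continuous_on by blast

lemma C1c_shift:
  assumes "C1c_test \<phi> D\<phi>"
  shows "C1c_test (\<lambda>y. \<phi> (y - c)) (\<lambda>y. D\<phi> (y - c))"
proof -
  from assms have d: "\<And>x. (\<phi> has_derivative D\<phi> x) (at x)" and c: "\<And>b. b \<in> Basis \<Longrightarrow> continuous_on UNIV (\<lambda>x. D\<phi> x b)"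
    and b: "bounded {x. \<phi> x \<noteq> 0}"
    unfolding C1c_test_def by auto
  have "((\<lambda>y. \<phi> (y - c)) has_derivative D\<phi> (x - c)) (at x)" for x
  proof -
    have dd: "((\<lambda>y. y - c) has_derivative (\<lambda>h. h)) (at x)" by (auto intro!: derivative_eq_intros)
    have "((\<lambda>y. \<phi> (y - c)) has_derivative (\<lambda>h. D\<phi> (x - c) h)) (at x within UNIV)"
      by (rule has_derivative_in_compose2[where t=UNIV and g'=D\<phi>, OF _ _ _ dd]) (auto intro: d)
    then show ?thesis by (metis (no_types) )
  qed
  moreover have "continuous_on UNIV (\<lambda>x. D\<phi> (x - c) b)" if "b \<in> Basis" for b
    by (rule continuous_on_compose2[OF c[OF that]]) (auto intro: continuous_intros)
  moreover have "bounded {y. \<phi> (y - c) \<noteq> 0}"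
  proof -
    have "{y. \<phi> (y - c) \<noteq> 0} = (\<lambda>x. c + x) ` {x. \<phi> x \<noteq> 0}" by (force simp: algebra_simps)
    then show ?thesis using bounded_translation[OF b] by simp
  qed
  ultimately show ?thesis unfolding C1c_test_def by blast
qed

lemma CS_integral:
  fixes f g :: "'b \<Rightarrow> real"
  assumes [measurable]: "f \<in> borel_measurable M" "g \<in> borel_measurable M"
    and fi: "integrable M (\<lambda>x. (f x)^2)" and gi: "integrable M (\<lambda>x. (g x)^2)"
  shows "integrable M (\<lambda>x. f x * g x)"
    and "(\<integral>x. \<bar>f x * g x\<bar> \<partial>M) \<le> sqrt (\<integral>x. (f x)^2 \<partial>M) * sqrt (\<integral>x. (g x)^2 \<partial>M)"
proof -
  define A where "A = (\<integral>x. (f x)^2 \<partial>M)"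
  define B where "B = (\<integral>x. (g x)^2 \<partial>M)"
  have A0: "A \<ge> 0" and B0: "B \<ge> 0" unfolding A_def B_def by auto
  have pw: "\<bar>f x * g x\<bar> \<le> (l * (f x)^2 + (g x)^2 / l) / 2" if l: "l > 0" for l x
  proof -
    have "0 \<le> (l * \<bar>f x\<bar> - \<bar>g x\<bar>)^2 / l" using l by simp
    also have "(l * \<bar>f x\<bar> - \<bar>g x\<bar>)^2 / l = l * (f x)^2 - 2 * \<bar>f x * g x\<bar> + (g x)^2 / l"
      using l by (simp add: power2_eq_square field_simps abs_mult)
    finally show ?thesis by simp
  qed
  show ii: "integrable M (\<lambda>x. f x * g x)"
  proof (rule Bochner_Integration.integrable_bound[where f="\<lambda>x. (1 * (f x)^2 + (g x)^2 / 1) / 2"])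
    show "integrable M (\<lambda>x. (1 * (f x)\<^sup>2 + (g x)\<^sup>2 / 1) / 2)" using fi gi by auto
    show "AE x in M. norm (f x * g x) \<le> norm ((1 * (f x)\<^sup>2 + (g x)\<^sup>2 / 1) / 2)"
      using pw[of 1] by auto
  qed measurable
  have bound: "(\<integral>x. \<bar>f x * g x\<bar> \<partial>M) \<le> (l * A + B / l) / 2" if l: "l > 0" for l
  proof -
    have "(\<integral>x. \<bar>f x * g x\<bar> \<partial>M) \<le> (\<integral>x. (l * (f x)^2 + (g x)^2 / l) / 2 \<partial>M)"
      using pw[OF l] fi gi ii by (intro integral_mono) auto
    also have "\<dots> = (l * A + B / l) / 2" using fi gi unfolding A_def B_def by simp
    finally show ?thesis .
  qed
  define X where "X = (\<integral>x. \<bar>f x * g x\<bar> \<partial>M)"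
  show "X \<le> sqrt A * sqrt B"
  proof (cases "A = 0 \<or> B = 0")
    case False
    then have Ap: "A > 0" and Bp: "B > 0" using A0 B0 by auto
    have "X \<le> (sqrt B / sqrt A * A + B / (sqrt B / sqrt A)) / 2"
      unfolding X_def using Ap Bp by (intro bound) auto
    also have "\<dots> = sqrt A * sqrt B"
    proof -
      have "A = sqrt A * sqrt A" "B = sqrt B * sqrt B" using A0 B0 by auto
      then show ?thesis using Ap Bp by (simp add: field_simps)
    qed
    finally show ?thesis .
  next
    case True
    show ?thesis
    proof (rule ccontr)
      assume "\<not> X \<le> sqrt A * sqrt B"
      then have Xp: "X > 0" using True by auto
      show False
      proof (cases "A = 0")
        case True
        have "X \<le> (((B+1)/X) * A + B / ((B+1)/X)) / 2" using Xp B0 unfolding X_def by (intro bound) auto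
        also have "\<dots> = B * X / (2 * (B + 1))" using True Xp B0 by (simp add: field_simps)
        also have "\<dots> < X" using Xp B0 by (simp add: field_simps) (smt (verit) mult_nonneg_nonneg)
        finally show False by simp
      next
        case False
        with \<open>A = 0 \<or> B = 0\<close> have B: "B = 0" by simp
        have "X \<le> ((X/(A+1)) * A + B / (X/(A+1))) / 2" using Xp A0 unfolding X_def by (intro bound) auto
        also have "\<dots> = X * A / (2 * (A + 1))" using B Xp A0 by (simp add: field_simps)
        also have "\<dots> < X" using Xp A0 by (simp add: field_simps) (smt (verit) mult_nonneg_nonneg)
        finally show False by simp
      qed
    qed
  qed
qed


lemma FTC_test:
  assumes \<phi>: "C1c_test \<phi> D\<phi>" and b: "b \<in> Basis"
  shows "(\<integral>s. indicator {0..1} s * (- t * D\<phi> (y - s *\<^sub>R (t *\<^sub>R b)) b) \<partial>lborel)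
         = \<phi> (y - t *\<^sub>R b) - \<phi> y"
proof -
  let ?h = "t *\<^sub>R b"
  from \<phi> have d: "\<And>x. (\<phi> has_derivative D\<phi> x) (at x)" and c: "continuous_on UNIV (\<lambda>x. D\<phi> x b)"
    unfolding C1c_test_def using b by auto
  have lin: "D\<phi> z (- ?h) = - t * D\<phi> z b" for z
  proof -
    have "linear (D\<phi> z)" using has_derivative_bounded_linear[OF d[of z]] bounded_linear.linear by blast
    then show ?thesis by (simp add: linear_neg linear_scale)
  qed
  have "(\<integral>s. indicator {0..1} s *\<^sub>R (- t * D\<phi> (y - s *\<^sub>R ?h) b) \<partial>lborel)
         = (\<lambda>s. \<phi> (y - s *\<^sub>R ?h)) 1 - (\<lambda>s. \<phi> (y - s *\<^sub>R ?h)) 0"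
  proof (rule integral_FTC_atLeastAtMost)
    fix s :: real
    have dd: "((\<lambda>s. y - s *\<^sub>R ?h) has_derivative (\<lambda>ds. - (ds *\<^sub>R ?h))) (at s)"
      by (auto intro!: derivative_eq_intros)
    have "((\<lambda>s. \<phi> (y - s *\<^sub>R ?h)) has_derivative (\<lambda>ds. D\<phi> (y - s *\<^sub>R ?h) (- (ds *\<^sub>R ?h)))) (at s within UNIV)"
      by (rule has_derivative_in_compose2[where t=UNIV and g'=D\<phi>, OF _ _ _ dd]) (auto intro: d)
    moreover have "D\<phi> (y - s *\<^sub>R ?h) (- (ds *\<^sub>R ?h)) = ds *\<^sub>R (- t * D\<phi> (y - s *\<^sub>R ?h) b)" for ds
    proof -
      have "linear (D\<phi> (y - s *\<^sub>R ?h))" using has_derivative_bounded_linear[OF d] bounded_linear.linear by blast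
      then show ?thesis by (simp add: linear_neg linear_scale)
    qed
    ultimately have "((\<lambda>s. \<phi> (y - s *\<^sub>R ?h)) has_vector_derivative (- t * D\<phi> (y - s *\<^sub>R ?h) b)) (at s)"
      unfolding has_vector_derivative_def by simp
    then show "((\<lambda>s. \<phi> (y - s *\<^sub>R ?h)) has_vector_derivative (- t * D\<phi> (y - s *\<^sub>R ?h) b)) (at s within {0..1})"
      by (rule has_vector_derivative_at_within)
  next
    show "continuous_on {0..1} (\<lambda>s. - t * D\<phi> (y - s *\<^sub>R ?h) b)"
      by (intro continuous_intros continuous_on_compose2[OF c]) auto
  qed simp
  then show ?thesis by simp
qed


lemma ind01: "integrable lborel (indicator {0..1::real} :: real \<Rightarrow> real)"
  by (intro integrable_real_indicator) auto

lemma shift_test_bound: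
  fixes u :: "'a::euclidean_space \<Rightarrow> real" and G :: "'a \<Rightarrow> 'a"
  assumes W: "W12_with_grad u G" and b: "b \<in> Basis" and \<phi>: "C1c_test \<phi> D\<phi>"
  shows "(\<integral>x. (u (x + t *\<^sub>R b) - u x) * \<phi> x \<partial>lborel)
           \<le> \<bar>t\<bar> * sqrt (\<integral>x. (G x \<bullet> b)^2 \<partial>lborel) * sqrt (\<integral>x. (\<phi> x)^2 \<partial>lborel)"
proof -
  define h where "h = t *\<^sub>R b"
  have um[measurable]: "u \<in> borel_measurable borel" and ui: "integrable lborel (\<lambda>x. (u x)^2)"
    and Gm[measurable]: "G \<in> borel_measurable borel" and Gi: "integrable lborel (\<lambda>x. (norm (G x))^2)"
    and wg: "weak_gradient u G"
    using W unfolding W12_with_grad_def by auto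
  obtain R where R: "R \<ge> 0" "\<And>x. norm x > R \<Longrightarrow> \<phi> x = 0" "\<And>x. norm x > R \<Longrightarrow> D\<phi> x = (\<lambda>h. 0)"
    using C1c_support[OF \<phi>] by blast
  obtain C where C: "\<And>x. \<bar>D\<phi> x b\<bar> \<le> C" "\<And>x. \<bar>\<phi> x\<bar> \<le> C"
    using C1c_bounded[OF \<phi> b] by blast
  have C0: "C \<ge> 0" using C(2)[of 0] by linarith
  have \<phi>c: "continuous_on UNIV \<phi>" by (rule C1c_continuous[OF \<phi>])
  have \<phi>m[measurable]: "\<phi> \<in> borel_measurable borel" using borel_measurable_continuous_onI[OF \<phi>c] .
  have Dc: "continuous_on UNIV (\<lambda>x. D\<phi> x b)" using \<phi> b unfolding C1c_test_def by auto
  have Gbm[measurable]: "(\<lambda>x. G x \<bullet> b) \<in> borel_measurable borel" by measurable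
  have Gbi: "integrable lborel (\<lambda>x. (G x \<bullet> b)^2)"
  proof (rule Bochner_Integration.integrable_bound[OF Gi])
    show "(\<lambda>x. (G x \<bullet> b)\<^sup>2) \<in> borel_measurable lborel" by measurable
    show "AE x in lborel. norm ((G x \<bullet> b)\<^sup>2) \<le> norm ((norm (G x))\<^sup>2)"
    proof (rule AE_I2)
      fix x
      have "\<bar>G x \<bullet> b\<bar> \<le> norm (G x)" using Basis_le_norm[OF b, of "G x"] by (simp add: inner_commute)
      then have "\<bar>G x \<bullet> b\<bar>^2 \<le> (norm (G x))^2" by (intro power_mono) auto
      then show "norm ((G x \<bullet> b)\<^sup>2) \<le> norm ((norm (G x))\<^sup>2)" by simp
    qed
  qed
  have \<phi>2i: "integrable lborel (\<lambda>x. (\<phi> x)^2)"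
  proof (rule Bochner_Integration.integrable_bound[where f="\<lambda>x. C^2 * indicator (cball 0 R) x"])
    show "integrable lborel (\<lambda>x. C^2 * indicator (cball 0 R) x)"
      by (intro integrable_mult_right integrable_real_indicator emeasure_bounded_finite) auto
    show "AE x in lborel. norm ((\<phi> x)\<^sup>2) \<le> norm (C\<^sup>2 * indicator (cball 0 R) x)"
    proof (rule AE_I2)
      fix x
      show "norm ((\<phi> x)\<^sup>2) \<le> norm (C\<^sup>2 * indicator (cball 0 R) x)"
      proof (cases "norm x > R")
        case True then show ?thesis using R(2) by simp
      next
        case False
        have "\<bar>\<phi> x\<bar>^2 \<le> C^2" using C(2)[of x] by (intro power_mono) auto
        then show ?thesis using False by (simp add: indicator_def)
      qed
    qed
  qed measurable
  define NG where "NG = sqrt (\<integral>x. (G x \<bullet> b)^2 \<partial>lborel)"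
  define N\<phi> where "N\<phi> = sqrt (\<integral>x. (\<phi> x)^2 \<partial>lborel)"
  have ush: "integrable lborel (\<lambda>x. (u (x + h))^2)"
    using ui by (subst integrable_shift[where f="\<lambda>x. (u x)^2"]) auto
  have i1: "integrable lborel (\<lambda>x. u (x + h) * \<phi> x)"
    by (rule L2_loc_integrable[OF _ ush, where C=C and R=R]) (use C R in auto)
  have i2: "integrable lborel (\<lambda>x. u x * \<phi> x)"
    by (rule L2_loc_integrable[OF _ ui, where C=C and R=R]) (use C R in auto)
  have e1: "(\<integral>x. u (x + h) * \<phi> x \<partial>lborel) = (\<integral>y. u y * \<phi> (y - h) \<partial>lborel)"
    using int_shift[of "\<lambda>y. u y * \<phi> (y - h)" h] by simp
  have i3: "integrable lborel (\<lambda>y. u y * (\<phi> (y - h) - \<phi> y))"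
  proof (rule L2_loc_integrable[OF _ ui, where C="2*C" and R="R + norm h"])
    fix x :: 'a
    show "\<bar>\<phi> (x - h) - \<phi> x\<bar> \<le> 2 * C" using C(2)[of x] C(2)[of "x - h"] by linarith
    assume a: "norm x > R + norm h"
    have "norm (x - h) \<ge> norm x - norm h" by (rule norm_triangle_ineq2)
    then have "norm (x - h) > R" using a by linarith
    moreover have "norm x > R" using a norm_ge_zero[of h] by linarith
    ultimately show "\<phi> (x - h) - \<phi> x = 0" using R(2) by simp
  qed auto
  have e2: "(\<integral>x. (u (x + h) - u x) * \<phi> x \<partial>lborel) = (\<integral>y. u y * (\<phi> (y - h) - \<phi> y) \<partial>lborel)"
  proof -
    have "(\<integral>x. (u (x + h) - u x) * \<phi> x \<partial>lborel) = (\<integral>x. u (x + h) * \<phi> x \<partial>lborel) - (\<integral>x. u x * \<phi> x \<partial>lborel)"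
      using i1 i2 by (simp add: left_diff_distrib)
    also have "\<dots> = (\<integral>y. u y * \<phi> (y - h) \<partial>lborel) - (\<integral>x. u x * \<phi> x \<partial>lborel)" using e1 by simp
    also have "\<dots> = (\<integral>y. u y * (\<phi> (y - h) - \<phi> y) \<partial>lborel)"
    proof -
      have "integrable lborel (\<lambda>y. u y * \<phi> (y - h))"
      proof (rule L2_loc_integrable[OF _ ui, where C=C and R="R + norm h"])
        fix x :: 'a assume a: "norm x > R + norm h"
        have "norm (x - h) \<ge> norm x - norm h" by (rule norm_triangle_ineq2)
        then have "norm (x - h) > R" using a by linarith
        then show "\<phi> (x - h) = 0" using R(2) by simp
      qed (use C in auto)
      then show ?thesis using i2 by (simp add: right_diff_distrib)
    qed
    finally show ?thesis .
  qed
  define Fp where "Fp y s = u y * (indicator {0..1::real} s * (- t * D\<phi> (y - s *\<^sub>R h) b))" for y s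
  define K where "K = cball (0::'a) (R + norm h)"
  have Dz: "D\<phi> (y - s *\<^sub>R h) b = 0" if "y \<notin> K" "s \<in> {0..1}" for y s
  proof -
    have "norm (s *\<^sub>R h) \<le> norm h" using that(2) by (auto simp: mult_left_le_one_le)
    moreover have "norm (y - s *\<^sub>R h) \<ge> norm y - norm (s *\<^sub>R h)" by (rule norm_triangle_ineq2[THEN order_trans[OF _ order_refl]])
    ultimately have "norm (y - s *\<^sub>R h) > R" using that(1) unfolding K_def by auto
    then show ?thesis using R(3) by simp
  qed
  have Fpb: "\<bar>Fp y s\<bar> \<le> \<bar>u y\<bar> * indicator K y * (\<bar>t\<bar> * C) * indicator {0..1::real} s" for y s
  proof (cases "s \<in> {0..1}")
    case True
    show ?thesis
    proof (cases "y \<in> K")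
      case True
      have "\<bar>Fp y s\<bar> = \<bar>u y\<bar> * (\<bar>t\<bar> * \<bar>D\<phi> (y - s *\<^sub>R h) b\<bar>)" using \<open>s \<in> {0..1}\<close> by (simp add: Fp_def abs_mult)
      also have "\<dots> \<le> \<bar>u y\<bar> * (\<bar>t\<bar> * C)" using C(1) by (intro mult_left_mono) auto
      finally show ?thesis using True \<open>s \<in> {0..1}\<close> by simp
    next
      case False then show ?thesis using Dz[OF False True] by (simp add: Fp_def)
    qed
  qed (simp add: Fp_def)
  have contD: "continuous_on UNIV (\<lambda>p::'a \<times> real. D\<phi> (fst p - snd p *\<^sub>R h) b)"
    by (intro continuous_on_compose2[OF Dc] continuous_intros) auto
  have Fpm[measurable]: "(\<lambda>(y, s). Fp y s) \<in> borel_measurable (lborel \<Otimes>\<^sub>M lborel)"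
  proof -
    have "(\<lambda>p::'a \<times> real. D\<phi> (fst p - snd p *\<^sub>R h) b) \<in> borel_measurable (lborel \<Otimes>\<^sub>M lborel)"
      using borel_measurable_continuous_Pair[of fst "lborel \<Otimes>\<^sub>M lborel" snd "\<lambda>y s. D\<phi> (y - s *\<^sub>R h) b"] contD
      by (simp add: case_prod_unfold)
    then show ?thesis unfolding Fp_def case_prod_unfold by measurable
  qed
  have uK: "integrable lborel (\<lambda>y. \<bar>u y\<bar> * indicator K y * (\<bar>t\<bar> * C))"
  proof -
    have "integrable lborel (\<lambda>y. u y * indicator K y)"
      by (rule L2_loc_integrable[OF _ ui, where C=1 and R="R + norm h"]) (auto simp: K_def indicator_def)
    then have "integrable lborel (\<lambda>y. \<bar>u y * indicator K y\<bar> * (\<bar>t\<bar> * C))" by auto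
    then show ?thesis by (simp add: abs_mult)
  qed
  have Fpi: "integrable (lborel \<Otimes>\<^sub>M lborel) (\<lambda>(y, s). Fp y s)"
  proof (rule lborel_pair.Fubini_integrable)
    show "(\<lambda>(y, s). Fp y s) \<in> borel_measurable (lborel \<Otimes>\<^sub>M lborel)" by (rule Fpm)
    show "AE y in lborel. integrable lborel (\<lambda>s. case (y, s) of (y, s) \<Rightarrow> Fp y s)"
    proof (rule AE_I2)
      fix y
      show "integrable lborel (\<lambda>s. case (y, s) of (y, s) \<Rightarrow> Fp y s)"
      proof (rule Bochner_Integration.integrable_bound[where f="\<lambda>s::real. \<bar>u y\<bar> * indicator K y * (\<bar>t\<bar> * C) * indicator {0..1::real} s"])
        show "integrable lborel (\<lambda>s::real. \<bar>u y\<bar> * indicator K y * (\<bar>t\<bar> * C) * indicator {0..1::real} s)" by (rule integrable_mult_right) (use ind01 in simp)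
        show "(\<lambda>s. case (y, s) of (y, s) \<Rightarrow> Fp y s) \<in> borel_measurable lborel"
          using Fpm by simp
        show "AE s in lborel. norm (case (y, s) of (y, s) \<Rightarrow> Fp y s) \<le> norm (\<bar>u y\<bar> * indicator K y * (\<bar>t\<bar> * C) * indicator {0..1::real} s)"
          using Fpb C0 by (intro AE_I2) (simp add: abs_mult)
      qed
    qed
    show "integrable lborel (\<lambda>y. LINT s|lborel. norm (case (y, s) of (y, s) \<Rightarrow> Fp y s))"
    proof (rule Bochner_Integration.integrable_bound[OF uK])
      show "(\<lambda>y. LINT s|lborel. norm (case (y, s) of (y, s) \<Rightarrow> Fp y s)) \<in> borel_measurable lborel"
        by (rule lborel.borel_measurable_lebesgue_integral) (use Fpm in measurable)
      show "AE y in lborel. norm (LINT s|lborel. norm (case (y, s) of (y, s) \<Rightarrow> Fp y s)) \<le> norm (\<bar>u y\<bar> * indicator K y * (\<bar>t\<bar> * C))"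
      proof (rule AE_I2)
        fix y
        have "(LINT s|lborel. norm (Fp y s)) \<le> (LINT s|lborel. \<bar>u y\<bar> * indicator K y * (\<bar>t\<bar> * C) * indicator {0..1::real} s)"
        proof -
          have "\<bar>LINT s|lborel. norm (Fp y s)\<bar> \<le> (LINT s|lborel. \<bar>u y\<bar> * indicator K y * (\<bar>t\<bar> * C) * indicator {0..1::real} s)"
            by (rule abs_integral_le) (use Fpb in auto)
          then show ?thesis by simp
        qed
        also have "\<dots> = \<bar>u y\<bar> * indicator K y * (\<bar>t\<bar> * C)" by simp
        finally show "norm (LINT s|lborel. norm (case (y, s) of (y, s) \<Rightarrow> Fp y s)) \<le> norm (\<bar>u y\<bar> * indicator K y * (\<bar>t\<bar> * C))"
          using C0 by (simp add: integral_nonneg_AE)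
      qed
    qed
  qed
  have fub: "(LINT s|lborel. LINT y|lborel. Fp y s) = (LINT y|lborel. LINT s|lborel. Fp y s)"
    using lborel_pair.Fubini_integral[OF Fpi] by simp
  have inner_s: "(LINT s|lborel. Fp y s) = u y * (\<phi> (y - h) - \<phi> y)" for y
  proof -
    have eq: "(LINT s|lborel. Fp y s) = u y * (LINT s|lborel. indicator {0..1::real} s * (- t * D\<phi> (y - s *\<^sub>R h) b))"
      unfolding Fp_def by (rule integral_mult_right_zero)
    have f: "(LINT s|lborel. indicator {0..1::real} s * (- t * D\<phi> (y - s *\<^sub>R h) b)) = \<phi> (y - h) - \<phi> y"
      using FTC_test[OF \<phi> b, of t y] unfolding h_def .
    show ?thesis by (simp only: eq f)
  qed
  have inner_y: "(LINT y|lborel. Fp y s) = indicator {0..1::real} s * t * (LINT y|lborel. (G y \<bullet> b) * \<phi> (y - s *\<^sub>R h))" for s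
  proof -
    have "(LINT y|lborel. Fp y s) = (LINT y|lborel. (indicator {0..1::real} s * (- t)) * (u y * D\<phi> (y - s *\<^sub>R h) b))"
      by (intro Bochner_Integration.integral_cong refl) (simp add: Fp_def mult_ac)
    also have "\<dots> = indicator {0..1::real} s * (- t) * (LINT y|lborel. u y * D\<phi> (y - s *\<^sub>R h) b)"
      by (rule integral_mult_right_zero)
    also have "(LINT y|lborel. u y * D\<phi> (y - s *\<^sub>R h) b) = - (LINT y|lborel. (G y \<bullet> b) * \<phi> (y - s *\<^sub>R h))"
      using wg C1c_shift[OF \<phi>, of "s *\<^sub>R h"] b unfolding weak_gradient_def by blast
    finally show ?thesis by simp
  qed
  have Ab: "\<bar>LINT y|lborel. (G y \<bullet> b) * \<phi> (y - s *\<^sub>R h)\<bar> \<le> NG * N\<phi>" for s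
  proof -
    have sh: "integrable lborel (\<lambda>y. (\<phi> (y - s *\<^sub>R h))^2)"
      using \<phi>2i integrable_shift[of "\<lambda>x. (\<phi> x)^2" "- (s *\<^sub>R h)"] by simp
    have "\<bar>LINT y|lborel. (G y \<bullet> b) * \<phi> (y - s *\<^sub>R h)\<bar> \<le> (LINT y|lborel. \<bar>(G y \<bullet> b) * \<phi> (y - s *\<^sub>R h)\<bar>)"
      by (rule integral_abs_bound)
    also have "\<dots> \<le> NG * sqrt (LINT y|lborel. (\<phi> (y - s *\<^sub>R h))^2)"
      unfolding NG_def by (rule CS_integral(2)[OF _ _ Gbi sh]) measurable
    also have "(LINT y|lborel. (\<phi> (y - s *\<^sub>R h))^2) = (LINT y|lborel. (\<phi> y)^2)"
      using int_shift[of "\<lambda>x. (\<phi> x)^2" "- (s *\<^sub>R h)"] by simp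
    finally show ?thesis unfolding N\<phi>_def .
  qed
  have "(\<integral>x. (u (x + h) - u x) * \<phi> x \<partial>lborel) = (LINT s|lborel. LINT y|lborel. Fp y s)"
    using e2 fub inner_s by simp
  also have "\<dots> \<le> \<bar>LINT s|lborel. LINT y|lborel. Fp y s\<bar>" by simp
  also have "\<dots> \<le> (LINT s|lborel. indicator {0..1::real} s * (\<bar>t\<bar> * (NG * N\<phi>)))"
  proof (rule abs_integral_le)
    show "integrable lborel (\<lambda>s. indicator {0..1::real} s * (\<bar>t\<bar> * (NG * N\<phi>)))" by simp
    show "AE s in lborel. \<bar>LINT y|lborel. Fp y s\<bar> \<le> indicator {0..1::real} s * (\<bar>t\<bar> * (NG * N\<phi>))"
    proof (rule AE_I2)
      fix s
      have "\<bar>LINT y|lborel. Fp y s\<bar> = indicator {0..1::real} s * \<bar>t\<bar> * \<bar>LINT y|lborel. (G y \<bullet> b) * \<phi> (y - s *\<^sub>R h)\<bar>"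
        unfolding inner_y by (simp add: abs_mult)
      also have "\<dots> \<le> indicator {0..1::real} s * \<bar>t\<bar> * (NG * N\<phi>)"
        using Ab[of s] by (intro mult_left_mono) auto
      finally show "\<bar>LINT y|lborel. Fp y s\<bar> \<le> indicator {0..1::real} s * (\<bar>t\<bar> * (NG * N\<phi>))" by (simp add: mult_ac)
    qed
  qed
  also have "\<dots> = \<bar>t\<bar> * NG * N\<phi>" by simp
  finally show ?thesis unfolding h_def NG_def N\<phi>_def .
qed


lemma W12_facts:
  fixes u :: "'a::euclidean_space \<Rightarrow> real"
  assumes W: "W12_with_grad u G"
  shows "u \<in> borel_measurable borel" "integrable lborel (\<lambda>x. (u x)^2)"
    "G \<in> borel_measurable borel" "integrable lborel (\<lambda>x. (norm (G x))^2)"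
  using W unfolding W12_with_grad_def by auto

lemma sq_diff_le: "((a::real) - b)^2 \<le> 2 * a^2 + 2 * b^2"
proof -
  have "0 \<le> (a + b)^2" by simp
  then show ?thesis by (simp add: power2_eq_square algebra_simps)
qed

lemma sq_sum_le: "((a::real) + b)^2 \<le> 2 * a^2 + 2 * b^2"
proof -
  have "0 \<le> (a - b)^2" by simp
  then show ?thesis by (simp add: power2_eq_square algebra_simps)
qed

lemma L2_shift_bound:
  fixes u :: "'a::euclidean_space \<Rightarrow> real"
  assumes W: "W12_with_grad u G" and b: "b \<in> Basis"
  shows "(\<integral>x. (u (x + t *\<^sub>R b) - u x)^2 \<partial>lborel) \<le> t^2 * (\<integral>x. (G x \<bullet> b)^2 \<partial>lborel)"
proof -
  note um[measurable] = W12_facts(1)[OF W]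
  note ui = W12_facts(2)[OF W]
  define v where "v x = u (x + t *\<^sub>R b) - u x" for x
  have vm[measurable]: "v \<in> borel_measurable lborel" unfolding v_def by measurable
  have ush: "integrable lborel (\<lambda>x. (u (x + t *\<^sub>R b))^2)"
    using ui by (subst integrable_shift[where f="\<lambda>x. (u x)^2"]) auto
  have vi: "integrable lborel (\<lambda>x. (v x)^2)"
  proof (rule Bochner_Integration.integrable_bound[where f="\<lambda>x. 2 * (u (x + t *\<^sub>R b))^2 + 2 * (u x)^2"])
    show "integrable lborel (\<lambda>x. 2 * (u (x + t *\<^sub>R b))\<^sup>2 + 2 * (u x)\<^sup>2)" using ush ui by auto
    show "AE x in lborel. norm ((v x)\<^sup>2) \<le> norm (2 * (u (x + t *\<^sub>R b))\<^sup>2 + 2 * (u x)\<^sup>2)"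
      by (rule AE_I2) (simp add: v_def sq_diff_le)
  qed measurable
  have "(\<integral>x. (v x)^2 \<partial>lborel) \<le> (\<bar>t\<bar> * sqrt (\<integral>x. (G x \<bullet> b)^2 \<partial>lborel))^2"
  proof (rule L2_duality[OF vm vi])
    show "0 \<le> \<bar>t\<bar> * sqrt (\<integral>x. (G x \<bullet> b)^2 \<partial>lborel)" by simp
    fix \<phi> :: "'a \<Rightarrow> real" and D\<phi> assume "C1c_test \<phi> D\<phi>"
    from shift_test_bound[OF W b this, of t]
    show "(\<integral>x. v x * \<phi> x \<partial>lborel) \<le> \<bar>t\<bar> * sqrt (\<integral>x. (G x \<bullet> b)^2 \<partial>lborel) * sqrt (\<integral>x. (\<phi> x)^2 \<partial>lborel)"
      unfolding v_def .
  qed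
  also have "\<dots> = t^2 * (\<integral>x. (G x \<bullet> b)^2 \<partial>lborel)"
    by (simp add: power_mult_distrib)
  finally show ?thesis unfolding v_def .
qed


lemma fourier_integrable:
  fixes u :: "'a::euclidean_space \<Rightarrow> real"
  assumes [measurable]: "u \<in> borel_measurable borel" and ui: "integrable lborel (\<lambda>x. (u x)^2)"
  shows "integrable lborel (\<lambda>x. cis (- (\<xi> \<bullet> x)) * complex_of_real ((u x)^2))"
proof (rule Bochner_Integration.integrable_bound[OF ui])
  show "(\<lambda>x. cis (- (\<xi> \<bullet> x)) * complex_of_real ((u x)\<^sup>2)) \<in> borel_measurable lborel"
    unfolding cis_conv_exp by measurable
  show "AE x in lborel. norm (cis (- (\<xi> \<bullet> x)) * complex_of_real ((u x)\<^sup>2)) \<le> norm ((u x)\<^sup>2)"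
    by (rule AE_I2) (simp add: norm_mult norm_power)
qed

lemma fourier_le:
  fixes u :: "'a::euclidean_space \<Rightarrow> real"
  shows "cmod (fourier (\<lambda>x. (u x)^2) \<xi>) \<le> (\<integral>x. (u x)^2 \<partial>lborel)"
proof -
  have "cmod (fourier (\<lambda>x. (u x)^2) \<xi>) \<le> (\<integral>x. norm (cis (- (\<xi> \<bullet> x)) * complex_of_real ((u x)^2)) \<partial>lborel)"
    unfolding fourier_def by (rule integral_norm_bound)
  also have "\<dots> = (\<integral>x. (u x)^2 \<partial>lborel)" by (simp add: norm_mult norm_power)
  finally show ?thesis .
qed

lemma fourier_shift:
  fixes u :: "'a::euclidean_space \<Rightarrow> real"
  assumes W: "W12_with_grad u G" and b: "b \<in> Basis"
  shows "cmod ((cis (t * (\<xi> \<bullet> b)) - 1) * fourier (\<lambda>x. (u x)^2) \<xi>)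
          \<le> \<bar>t\<bar> * sqrt (\<integral>x. (G x \<bullet> b)^2 \<partial>lborel) * (2 * sqrt (\<integral>x. (u x)^2 \<partial>lborel))"
proof -
  note um[measurable] = W12_facts(1)[OF W]
  note ui = W12_facts(2)[OF W]
  define h where "h = t *\<^sub>R b"
  define f where "f x = cis (- (\<xi> \<bullet> x)) * complex_of_real ((u x)^2)" for x
  define g where "g x = cis (- (\<xi> \<bullet> x)) * complex_of_real ((u (x + h))^2)" for x
  define F where "F = fourier (\<lambda>x. (u x)^2) \<xi>"
  have ush: "integrable lborel (\<lambda>x. (u (x + h))^2)"
    using ui by (subst integrable_shift[where f="\<lambda>x. (u x)^2"]) auto
  have fm[measurable]: "f \<in> borel_measurable borel" unfolding f_def cis_conv_exp by measurable
  have fi: "integrable lborel f" unfolding f_def by (rule fourier_integrable[OF um ui])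
  have gi: "integrable lborel g" unfolding g_def by (rule fourier_integrable[OF _ ush]) measurable
  have F_eq: "F = integral\<^sup>L lborel f" unfolding F_def fourier_def f_def ..
  have "integral\<^sup>L lborel f = (\<integral>x. f (x + h) \<partial>lborel)" by (rule int_shift[symmetric]) measurable
  also have "\<dots> = (\<integral>x. cis (- (\<xi> \<bullet> h)) * g x \<partial>lborel)"
  proof (intro Bochner_Integration.integral_cong refl)
    fix x
    have "cis (- (\<xi> \<bullet> (x + h))) = cis (- (\<xi> \<bullet> h)) * cis (- (\<xi> \<bullet> x))"
      unfolding cis_mult by (simp add: inner_add_right algebra_simps)
    then show "f (x + h) = cis (- (\<xi> \<bullet> h)) * g x" by (simp add: f_def g_def mult_ac)
  qed
  also have "\<dots> = cis (- (\<xi> \<bullet> h)) * integral\<^sup>L lborel g" by (rule integral_mult_right_zero)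
  finally have "integral\<^sup>L lborel g = cis (\<xi> \<bullet> h) * F"
    unfolding F_eq by (simp add: cis_mult)
  then have "(cis (\<xi> \<bullet> h) - 1) * F = integral\<^sup>L lborel g - integral\<^sup>L lborel f"
    using F_eq by (simp add: algebra_simps)
  also have "\<dots> = (\<integral>x. g x - f x \<partial>lborel)" using fi gi by simp
  finally have eq: "(cis (\<xi> \<bullet> h) - 1) * F = (\<integral>x. g x - f x \<partial>lborel)" .
  define v where "v x = u (x + h) - u x" for x
  define w where "w x = u (x + h) + u x" for x
  have vm[measurable]: "v \<in> borel_measurable lborel" unfolding v_def by measurable
  have wm[measurable]: "w \<in> borel_measurable lborel" unfolding w_def by measurable
  have vi: "integrable lborel (\<lambda>x. (v x)^2)"
  proof (rule Bochner_Integration.integrable_bound[where f="\<lambda>x. 2 * (u (x + h))^2 + 2 * (u x)^2"])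
    show "integrable lborel (\<lambda>x. 2 * (u (x + h))\<^sup>2 + 2 * (u x)\<^sup>2)" using ush ui by auto
    show "AE x in lborel. norm ((v x)\<^sup>2) \<le> norm (2 * (u (x + h))\<^sup>2 + 2 * (u x)\<^sup>2)"
      by (rule AE_I2) (simp add: v_def sq_diff_le)
  qed measurable
  have wi: "integrable lborel (\<lambda>x. (w x)^2)"
  proof (rule Bochner_Integration.integrable_bound[where f="\<lambda>x. 2 * (u (x + h))^2 + 2 * (u x)^2"])
    show "integrable lborel (\<lambda>x. 2 * (u (x + h))\<^sup>2 + 2 * (u x)\<^sup>2)" using ush ui by auto
    show "AE x in lborel. norm ((w x)\<^sup>2) \<le> norm (2 * (u (x + h))\<^sup>2 + 2 * (u x)\<^sup>2)"
      by (rule AE_I2) (simp add: w_def sq_sum_le)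
  qed measurable
  have "cmod ((cis (\<xi> \<bullet> h) - 1) * F) \<le> (\<integral>x. norm (g x - f x) \<partial>lborel)"
    unfolding eq by (rule integral_norm_bound)
  also have "(\<integral>x. norm (g x - f x) \<partial>lborel) = (\<integral>x. \<bar>v x * w x\<bar> \<partial>lborel)"
  proof (intro Bochner_Integration.integral_cong refl)
    fix x
    have "g x - f x = cis (- (\<xi> \<bullet> x)) * complex_of_real (v x * w x)"
      by (simp add: g_def f_def v_def w_def algebra_simps power2_eq_square)
    then show "norm (g x - f x) = \<bar>v x * w x\<bar>" by (simp add: norm_mult norm_power abs_mult)
  qed
  also have "\<dots> \<le> sqrt (\<integral>x. (v x)^2 \<partial>lborel) * sqrt (\<integral>x. (w x)^2 \<partial>lborel)"
    by (rule CS_integral(2)[OF vm wm vi wi])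
  also have "\<dots> \<le> (\<bar>t\<bar> * sqrt (\<integral>x. (G x \<bullet> b)^2 \<partial>lborel)) * (2 * sqrt (\<integral>x. (u x)^2 \<partial>lborel))"
  proof (rule mult_mono)
    have "(\<integral>x. (v x)^2 \<partial>lborel) \<le> t^2 * (\<integral>x. (G x \<bullet> b)^2 \<partial>lborel)"
      using L2_shift_bound[OF W b, of t] unfolding v_def h_def .
    then have "sqrt (\<integral>x. (v x)^2 \<partial>lborel) \<le> sqrt (t^2 * (\<integral>x. (G x \<bullet> b)^2 \<partial>lborel))"
      by (rule real_sqrt_le_mono)
    then show "sqrt (\<integral>x. (v x)^2 \<partial>lborel) \<le> \<bar>t\<bar> * sqrt (\<integral>x. (G x \<bullet> b)^2 \<partial>lborel)"
      by (simp add: real_sqrt_mult)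
    have "(\<integral>x. (w x)^2 \<partial>lborel) \<le> (\<integral>x. 2 * (u (x + h))^2 + 2 * (u x)^2 \<partial>lborel)"
      using wi ush ui by (intro integral_mono) (auto simp: w_def sq_sum_le)
    also have "\<dots> = 2 * (\<integral>x. (u (x + h))^2 \<partial>lborel) + 2 * (\<integral>x. (u x)^2 \<partial>lborel)"
      using ush ui by simp
    also have "(\<integral>x. (u (x + h))^2 \<partial>lborel) = (\<integral>x. (u x)^2 \<partial>lborel)"
      by (rule int_shift[of "\<lambda>x. (u x)^2"]) measurable
    finally have "(\<integral>x. (w x)^2 \<partial>lborel) \<le> 2^2 * (\<integral>x. (u x)^2 \<partial>lborel)" by simp
    then have "sqrt (\<integral>x. (w x)^2 \<partial>lborel) \<le> sqrt (2^2 * (\<integral>x. (u x)^2 \<partial>lborel))"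
      by (rule real_sqrt_le_mono)
    then show "sqrt (\<integral>x. (w x)^2 \<partial>lborel) \<le> 2 * sqrt (\<integral>x. (u x)^2 \<partial>lborel)"
      by (simp add: real_sqrt_mult)
  qed auto
  finally show ?thesis unfolding h_def F_def by (simp add: mult_ac)
qed


lemma cmod_cis_minus_one: "cmod (cis \<theta> - 1) = sqrt ((cos \<theta> - 1)^2 + (sin \<theta>)^2)"
  by (simp add: cmod_def)

lemma norm_sq_Basis: "(norm (x::'a::euclidean_space))^2 = (\<Sum>b\<in>Basis. (x \<bullet> b)^2)"
proof -
  have "(norm x)^2 = x \<bullet> x" by (rule power2_norm_eq_inner)
  also have "\<dots> = (\<Sum>b\<in>Basis. (x \<bullet> b) * (x \<bullet> b))" by (rule euclidean_inner)
  finally show ?thesis by (simp add: power2_eq_square)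
qed

lemma ev_ne0: "eventually (\<lambda>t::real. t \<noteq> 0) (at 0)"
  by (simp add: eventually_at_filter)

lemma lim_cis_quot:
  fixes c :: real
  shows "((\<lambda>t. cmod (cis (t * c) - 1) / \<bar>t\<bar>) \<longlongrightarrow> \<bar>c\<bar>) (at 0)"
proof -
  have d1: "((\<lambda>t. cos (t * c)) has_real_derivative (- sin (0 * c) * c)) (at 0)"
    by (auto intro!: derivative_eq_intros)
  have d2: "((\<lambda>t. sin (t * c)) has_real_derivative (cos (0 * c) * c)) (at 0)"
    by (auto intro!: derivative_eq_intros)
  have l1: "((\<lambda>t. (cos (t * c) - 1) / t) \<longlongrightarrow> 0) (at 0)"
    using d1[unfolded DERIV_def] by simp
  have l2: "((\<lambda>t. sin (t * c) / t) \<longlongrightarrow> c) (at 0)"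
    using d2[unfolded DERIV_def] by simp
  have l3: "((\<lambda>t. sqrt (((cos (t * c) - 1) / t)^2 + (sin (t * c) / t)^2)) \<longlongrightarrow> sqrt (0^2 + c^2)) (at 0)"
    by (intro tendsto_intros l1 l2)
  have ev: "\<forall>\<^sub>F t in at 0. sqrt (((cos (t * c) - 1) / t)^2 + (sin (t * c) / t)^2) = cmod (cis (t * c) - 1) / \<bar>t\<bar>"
  proof (rule eventually_mono[OF ev_ne0])
    fix t :: real assume "t \<noteq> 0"
    have "((cos (t * c) - 1) / t)^2 + (sin (t * c) / t)^2 = ((cos (t * c) - 1)^2 + (sin (t * c))^2) / (\<bar>t\<bar>^2)"
      by (simp add: power_divide add_divide_distrib)
    then show "sqrt (((cos (t * c) - 1) / t)^2 + (sin (t * c) / t)^2) = cmod (cis (t * c) - 1) / \<bar>t\<bar>"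
      by (simp add: cmod_cis_minus_one real_sqrt_divide)
  qed
  from tendsto_cong[OF ev] l3 show ?thesis by simp
qed

lemma Gb_integrable:
  fixes G :: "'a::euclidean_space \<Rightarrow> 'a"
  assumes Gm[measurable]: "G \<in> borel_measurable borel" and Gi: "integrable lborel (\<lambda>x. (norm (G x))^2)" and b: "b \<in> Basis"
  shows "integrable lborel (\<lambda>x. (G x \<bullet> b)^2)"
proof (rule Bochner_Integration.integrable_bound[OF Gi])
  show "(\<lambda>x. (G x \<bullet> b)\<^sup>2) \<in> borel_measurable lborel" by measurable
  show "AE x in lborel. norm ((G x \<bullet> b)\<^sup>2) \<le> norm ((norm (G x))\<^sup>2)"
  proof (rule AE_I2)
    fix x
    have "\<bar>G x \<bullet> b\<bar> \<le> norm (G x)" using Basis_le_norm[OF b, of "G x"] by (simp add: inner_commute)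
    then have "\<bar>G x \<bullet> b\<bar>^2 \<le> (norm (G x))^2" by (intro power_mono) auto
    then show "norm ((G x \<bullet> b)\<^sup>2) \<le> norm ((norm (G x))\<^sup>2)" by simp
  qed
qed

lemma fourier_grad_b:
  fixes u :: "'a::euclidean_space \<Rightarrow> real"
  assumes W: "W12_with_grad u G" and b: "b \<in> Basis"
  shows "\<bar>\<xi> \<bullet> b\<bar> * cmod (fourier (\<lambda>x. (u x)^2) \<xi>)
          \<le> 2 * sqrt (\<integral>x. (G x \<bullet> b)^2 \<partial>lborel) * sqrt (\<integral>x. (u x)^2 \<partial>lborel)"
proof -
  define c where "c = \<xi> \<bullet> b"
  define F where "F = fourier (\<lambda>x. (u x)^2) \<xi>"
  define K where "K = 2 * sqrt (\<integral>x. (G x \<bullet> b)^2 \<partial>lborel) * sqrt (\<integral>x. (u x)^2 \<partial>lborel)"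
  have lim: "((\<lambda>t. cmod (cis (t * c) - 1) / \<bar>t\<bar> * cmod F) \<longlongrightarrow> \<bar>c\<bar> * cmod F) (at 0)"
    by (intro tendsto_intros lim_cis_quot)
  have ev: "\<forall>\<^sub>F t in at 0. cmod (cis (t * c) - 1) / \<bar>t\<bar> * cmod F \<le> K"
  proof (rule eventually_mono[OF ev_ne0])
    fix t :: real assume t: "t \<noteq> 0"
    have "cmod (cis (t * c) - 1) * cmod F \<le> \<bar>t\<bar> * K"
      using fourier_shift[OF W b, of t \<xi>] unfolding c_def F_def K_def by (simp add: norm_mult mult_ac)
    then show "cmod (cis (t * c) - 1) / \<bar>t\<bar> * cmod F \<le> K" using t
      by (simp add: field_simps)
  qed
  have "\<bar>c\<bar> * cmod F \<le> K" by (rule tendsto_upperbound[OF lim ev]) simp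
  then show ?thesis unfolding c_def F_def K_def .
qed

lemma fourier_grad:
  fixes u :: "'a::euclidean_space \<Rightarrow> real"
  assumes W: "W12_with_grad u G"
  shows "(norm \<xi>)^2 * (cmod (fourier (\<lambda>x. (u x)^2) \<xi>))^2
          \<le> 4 * (\<integral>x. (u x)^2 \<partial>lborel) * (\<integral>x. (norm (G x))^2 \<partial>lborel)"
proof -
  note Gm[measurable] = W12_facts(3)[OF W]
  note Gi = W12_facts(4)[OF W]
  define F where "F = fourier (\<lambda>x. (u x)^2) \<xi>"
  define U where "U = (\<integral>x. (u x)^2 \<partial>lborel)"
  have U0: "U \<ge> 0" unfolding U_def by simp
  have n: "(norm \<xi>)^2 = (\<Sum>b\<in>Basis. (\<xi> \<bullet> b)^2)"
  proof -
    have "(norm \<xi>)^2 = \<xi> \<bullet> \<xi>" by (rule power2_norm_eq_inner)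
    also have "\<dots> = (\<Sum>b\<in>Basis. (\<xi> \<bullet> b) * (\<xi> \<bullet> b))" by (rule euclidean_inner)
    finally show ?thesis by (simp add: power2_eq_square)
  qed
  have "(norm \<xi>)^2 * (cmod F)^2 = (\<Sum>b\<in>Basis. (\<bar>\<xi> \<bullet> b\<bar> * cmod F)^2)"
    unfolding n sum_distrib_right by (simp add: power_mult_distrib)
  also have "\<dots> \<le> (\<Sum>b\<in>Basis. (2 * sqrt (\<integral>x. (G x \<bullet> b)^2 \<partial>lborel) * sqrt U)^2)"
    using fourier_grad_b[OF W, of _ \<xi>] unfolding F_def U_def
    by (intro sum_mono power_mono) auto
  also have "\<dots> = (\<Sum>b\<in>Basis. 4 * U * (\<integral>x. (G x \<bullet> b)^2 \<partial>lborel))"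
    using U0 by (intro sum.cong refl) (simp add: power_mult_distrib)
  also have "\<dots> = 4 * U * (\<Sum>b\<in>Basis. (\<integral>x. (G x \<bullet> b)^2 \<partial>lborel))"
    by (simp add: sum_distrib_left)
  also have "(\<Sum>b\<in>Basis. (\<integral>x. (G x \<bullet> b)^2 \<partial>lborel)) = (\<integral>x. (\<Sum>b\<in>Basis. (G x \<bullet> b)^2) \<partial>lborel)"
    by (rule Bochner_Integration.integral_sum[symmetric]) (rule Gb_integrable[OF Gm Gi])
  also have "(\<integral>x. (\<Sum>b\<in>Basis. (G x \<bullet> b)^2) \<partial>lborel) = (\<integral>x. (norm (G x))^2 \<partial>lborel)"
    by (simp add: norm_sq_Basis)
  finally show ?thesis unfolding F_def U_def .
qed


lemma norm_integral_le_nn: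
  fixes f :: "'b \<Rightarrow> 'c::{banach,second_countable_topology}"
  shows "ennreal (norm (integral\<^sup>L M f)) \<le> (\<integral>\<^sup>+x. ennreal (norm (f x)) \<partial>M)"
proof (cases "integrable M f")
  case True then show ?thesis by (rule integral_norm_bound_ennreal)
next
  case False then show ?thesis by (simp add: not_integrable_integral_eq)
qed

lemma fourier_sq_bound:
  fixes u :: "'a::euclidean_space \<Rightarrow> real"
  assumes W: "W12_with_grad u G" and u1: "(\<integral>x. (u x)^2 \<partial>lborel) = 1" and R: "R > 0"
  shows "(cmod (fourier (\<lambda>x. (u x)^2) \<xi>))^2 \<le> indicator {\<xi>. norm \<xi> \<le> R} \<xi>
          + 4 * (\<integral>x. (norm (G x))^2 \<partial>lborel) * (indicator {\<xi>. norm \<xi> > R} \<xi> / (norm \<xi>)^2)"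
proof -
  define F where "F = cmod (fourier (\<lambda>x. (u x)^2) \<xi>)"
  define N where "N = (\<integral>x. (norm (G x))^2 \<partial>lborel)"
  have N0: "N \<ge> 0" unfolding N_def by simp
  have F1: "F \<le> 1" "F \<ge> 0" using fourier_le[of u \<xi>] u1 unfolding F_def by auto
  show ?thesis
  proof (cases "norm \<xi> \<le> R")
    case True
    have "F^2 \<le> 1^2" using F1 by (intro power_mono) auto
    then show ?thesis using True N0 unfolding F_def N_def by (simp add: indicator_def)
  next
    case False
    then have np: "(norm \<xi>)^2 > 0" using R by auto
    have "(norm \<xi>)^2 * F^2 \<le> 4 * 1 * N" using fourier_grad[OF W, of \<xi>] u1 unfolding F_def N_def by simp
    then have "F^2 \<le> 4 * N / (norm \<xi>)^2" using np by (simp add: field_simps)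
    then show ?thesis using False unfolding F_def N_def by (simp add: indicator_def)
  qed
qed

lemma fourier_prod_bound:
  fixes u v :: "'a::euclidean_space \<Rightarrow> real"
  assumes Wu: "W12_with_grad u G" and u1: "(\<integral>x. (u x)^2 \<partial>lborel) = 1"
    and Wv: "W12_with_grad v H" and v1: "(\<integral>x. (v x)^2 \<partial>lborel) = 1" and R: "R > 0"
  shows "cmod (fourier (\<lambda>x. (u x)^2) \<xi> * cnj (fourier (\<lambda>x. (v x)^2) \<xi>)) \<le> indicator {\<xi>. norm \<xi> \<le> R} \<xi>
          + 2 * ((\<integral>x. (norm (G x))^2 \<partial>lborel) + (\<integral>x. (norm (H x))^2 \<partial>lborel)) * (indicator {\<xi>. norm \<xi> > R} \<xi> / (norm \<xi>)^2)"
proof -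
  define a where "a = cmod (fourier (\<lambda>x. (u x)^2) \<xi>)"
  define b where "b = cmod (fourier (\<lambda>x. (v x)^2) \<xi>)"
  have "cmod (fourier (\<lambda>x. (u x)^2) \<xi> * cnj (fourier (\<lambda>x. (v x)^2) \<xi>)) = a * b"
    unfolding a_def b_def by (simp add: norm_mult)
  also have "\<dots> \<le> (a^2 + b^2) / 2"
  proof -
    have "0 \<le> (a - b)^2" by simp
    then show ?thesis by (simp add: power2_eq_square algebra_simps)
  qed
  also have "\<dots> \<le> ((indicator {\<xi>. norm \<xi> \<le> R} \<xi>
          + 4 * (\<integral>x. (norm (G x))^2 \<partial>lborel) * (indicator {\<xi>. norm \<xi> > R} \<xi> / (norm \<xi>)^2))
        + (indicator {\<xi>. norm \<xi> \<le> R} \<xi>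
          + 4 * (\<integral>x. (norm (H x))^2 \<partial>lborel) * (indicator {\<xi>. norm \<xi> > R} \<xi> / (norm \<xi>)^2))) / 2"
    using fourier_sq_bound[OF Wu u1 R, of \<xi>] fourier_sq_bound[OF Wv v1 R, of \<xi>] unfolding a_def b_def
    by (intro divide_right_mono add_mono) auto
  also have "\<dots> = indicator {\<xi>. norm \<xi> \<le> R} \<xi>
          + 2 * ((\<integral>x. (norm (G x))^2 \<partial>lborel) + (\<integral>x. (norm (H x))^2 \<partial>lborel)) * (indicator {\<xi>. norm \<xi> > R} \<xi> / (norm \<xi>)^2)"
    by (simp add: algebra_simps)
  finally show ?thesis .
qed


lemma nu_bound:
  fixes u v :: "'a::euclidean_space \<Rightarrow> real" and \<nu> :: "'a measure"
  assumes s\<nu>: "sets \<nu> = sets borel"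
    and Wu: "W12_with_grad u G" and u1: "(\<integral>x. (u x)^2 \<partial>lborel) = 1"
    and Wv: "W12_with_grad v H" and v1: "(\<integral>x. (v x)^2 \<partial>lborel) = 1" and R: "R > 0"
  shows "ennreal (cmod (\<integral>\<xi>. fourier (\<lambda>x. (u x)^2) \<xi> * cnj (fourier (\<lambda>x. (v x)^2) \<xi>) \<partial>\<nu>))
    \<le> emeasure \<nu> {\<xi>. norm \<xi> \<le> R} + ennreal (2 * ((\<integral>x. (norm (G x))^2 \<partial>lborel) + (\<integral>x. (norm (H x))^2 \<partial>lborel)))
         * (\<integral>\<^sup>+ \<xi>. ennreal (indicator {\<xi>. norm \<xi> > R} \<xi> / (norm \<xi>)\<^sup>2) \<partial>\<nu>)"
proof -
  define c where "c = 2 * ((\<integral>x. (norm (G x))^2 \<partial>lborel) + (\<integral>x. (norm (H x))^2 \<partial>lborel))"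
  have c0: "c \<ge> 0" unfolding c_def by simp
  have meas: "f \<in> borel_measurable \<nu>" if "f \<in> borel_measurable borel" for f :: "'a \<Rightarrow> ennreal"
    by (subst measurable_cong_sets[OF s\<nu> refl]) (rule that)
  have m1: "(\<lambda>\<xi>. ennreal (indicator {\<xi>::'a. norm \<xi> \<le> R} \<xi>)) \<in> borel_measurable \<nu>"
    by (rule meas) measurable
  have m2: "(\<lambda>\<xi>. ennreal (indicator {\<xi>::'a. norm \<xi> > R} \<xi> / (norm \<xi>)\<^sup>2)) \<in> borel_measurable \<nu>"
    by (rule meas) measurable
  have "ennreal (cmod (\<integral>\<xi>. fourier (\<lambda>x. (u x)^2) \<xi> * cnj (fourier (\<lambda>x. (v x)^2) \<xi>) \<partial>\<nu>))
     \<le> (\<integral>\<^sup>+ \<xi>. ennreal (cmod (fourier (\<lambda>x. (u x)^2) \<xi> * cnj (fourier (\<lambda>x. (v x)^2) \<xi>))) \<partial>\<nu>)"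
    by (rule norm_integral_le_nn)
  also have "\<dots> \<le> (\<integral>\<^sup>+ \<xi>. ennreal (indicator {\<xi>. norm \<xi> \<le> R} \<xi>) + ennreal c * ennreal (indicator {\<xi>. norm \<xi> > R} \<xi> / (norm \<xi>)\<^sup>2) \<partial>\<nu>)"
  proof (rule nn_integral_mono)
    fix \<xi>
    have "cmod (fourier (\<lambda>x. (u x)^2) \<xi> * cnj (fourier (\<lambda>x. (v x)^2) \<xi>))
          \<le> indicator {\<xi>. norm \<xi> \<le> R} \<xi> + c * (indicator {\<xi>. norm \<xi> > R} \<xi> / (norm \<xi>)^2)"
      unfolding c_def by (rule fourier_prod_bound[OF Wu u1 Wv v1 R])
    then have "ennreal (cmod (fourier (\<lambda>x. (u x)^2) \<xi> * cnj (fourier (\<lambda>x. (v x)^2) \<xi>)))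
          \<le> ennreal (indicator {\<xi>. norm \<xi> \<le> R} \<xi> + c * (indicator {\<xi>. norm \<xi> > R} \<xi> / (norm \<xi>)^2))"
      by (rule ennreal_leI)
    also have "\<dots> = ennreal (indicator {\<xi>. norm \<xi> \<le> R} \<xi>) + ennreal c * ennreal (indicator {\<xi>. norm \<xi> > R} \<xi> / (norm \<xi>)\<^sup>2)"
    proof -
      have q0: "indicator {\<xi>. norm \<xi> > R} \<xi> / (norm \<xi>)\<^sup>2 \<ge> 0" by simp
      have i0: "indicator {\<xi>. norm \<xi> \<le> R} \<xi> \<ge> (0::real)" by simp
      show ?thesis
        using ennreal_plus[OF i0 mult_nonneg_nonneg[OF c0 q0]] ennreal_mult[OF c0 q0] by simp
    qed
    finally show "ennreal (cmod (fourier (\<lambda>x. (u x)^2) \<xi> * cnj (fourier (\<lambda>x. (v x)^2) \<xi>)))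
          \<le> ennreal (indicator {\<xi>. norm \<xi> \<le> R} \<xi>) + ennreal c * ennreal (indicator {\<xi>. norm \<xi> > R} \<xi> / (norm \<xi>)\<^sup>2)" .
  qed
  also have "\<dots> = (\<integral>\<^sup>+ \<xi>. ennreal (indicator {\<xi>. norm \<xi> \<le> R} \<xi>) \<partial>\<nu>)
        + ennreal c * (\<integral>\<^sup>+ \<xi>. ennreal (indicator {\<xi>. norm \<xi> > R} \<xi> / (norm \<xi>)\<^sup>2) \<partial>\<nu>)"
    using m1 m2 by (simp add: nn_integral_add nn_integral_cmult)
  also have "(\<integral>\<^sup>+ \<xi>. ennreal (indicator {\<xi>. norm \<xi> \<le> R} \<xi>) \<partial>\<nu>) = emeasure \<nu> {\<xi>. norm \<xi> \<le> R}"
  proof -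
    have "{\<xi>::'a. norm \<xi> \<le> R} \<in> sets \<nu>" unfolding s\<nu> by measurable
    then show ?thesis by (simp add: ennreal_indicator)
  qed
  finally show ?thesis unfolding c_def .
qed


lemma shift_bound_r:
  fixes \<eta>0 :: "real \<Rightarrow> real"
  assumes [measurable]: "\<eta>0 \<in> borel_measurable borel" and s: "s \<in> {0..1}"
  shows "(\<integral>\<^sup>+ r. ennreal (indicator {0..1} r * \<eta>0 (s - r)) \<partial>lborel)
          \<le> (\<integral>\<^sup>+ t. ennreal (indicator {-1..1} t * \<eta>0 t) \<partial>lborel)"
proof -
  have "(\<integral>\<^sup>+ t. ennreal (indicator {-1..1} t * \<eta>0 t) \<partial>lborel)
        = ennreal \<bar>-1::real\<bar> * (\<integral>\<^sup>+ r. ennreal (indicator {-1..1} (s + (-1) * r) * \<eta>0 (s + (-1) * r)) \<partial>lborel)"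
    by (rule nn_integral_real_affine[where f="\<lambda>t. ennreal (indicator {-1..1} t * \<eta>0 t)"]) auto
  also have "\<dots> = (\<integral>\<^sup>+ r. ennreal (indicator {-1..1} (s - r) * \<eta>0 (s - r)) \<partial>lborel)" by simp
  finally have eq: "(\<integral>\<^sup>+ t. ennreal (indicator {-1..1} t * \<eta>0 t) \<partial>lborel)
     = (\<integral>\<^sup>+ r. ennreal (indicator {-1..1} (s - r) * \<eta>0 (s - r)) \<partial>lborel)" .
  show ?thesis unfolding eq
  proof (rule nn_integral_mono)
    fix r
    show "ennreal (indicator {0..1} r * \<eta>0 (s - r)) \<le> ennreal (indicator {-1..1} (s - r) * \<eta>0 (s - r))"
      using s by (cases "r \<in> {0..1}") (auto simp: indicator_def intro!: ennreal_leI)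
  qed
qed

lemma shift_bound_s:
  fixes \<eta>0 :: "real \<Rightarrow> real"
  assumes [measurable]: "\<eta>0 \<in> borel_measurable borel" and r: "r \<in> {0..1}"
  shows "(\<integral>\<^sup>+ s. ennreal (indicator {0..1} s * \<eta>0 (s - r)) \<partial>lborel)
          \<le> (\<integral>\<^sup>+ t. ennreal (indicator {-1..1} t * \<eta>0 t) \<partial>lborel)"
proof -
  have "(\<integral>\<^sup>+ t. ennreal (indicator {-1..1} t * \<eta>0 t) \<partial>lborel)
        = ennreal \<bar>1::real\<bar> * (\<integral>\<^sup>+ s. ennreal (indicator {-1..1} (-r + 1 * s) * \<eta>0 (-r + 1 * s)) \<partial>lborel)"
    by (rule nn_integral_real_affine[where f="\<lambda>t. ennreal (indicator {-1..1} t * \<eta>0 t)"]) auto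
  also have "\<dots> = (\<integral>\<^sup>+ s. ennreal (indicator {-1..1} (s - r) * \<eta>0 (s - r)) \<partial>lborel)" by simp
  finally have eq: "(\<integral>\<^sup>+ t. ennreal (indicator {-1..1} t * \<eta>0 t) \<partial>lborel)
     = (\<integral>\<^sup>+ s. ennreal (indicator {-1..1} (s - r) * \<eta>0 (s - r)) \<partial>lborel)" .
  show ?thesis unfolding eq
  proof (rule nn_integral_mono)
    fix s
    show "ennreal (indicator {0..1} s * \<eta>0 (s - r)) \<le> ennreal (indicator {-1..1} (s - r) * \<eta>0 (s - r))"
      using r by (cases "s \<in> {0..1}") (auto simp: indicator_def intro!: ennreal_leI)
  qed
qed


lemma enn_arith:
  assumes "a \<ge> 0" "L \<ge> 0" "j \<ge> 0" "d \<ge> 0"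
  shows "ennreal a * ennreal L + 2 * ennreal j * ennreal L * ennreal d + 2 * ennreal j * ennreal L * ennreal d = ennreal (a*L + 2*j*L*d + 2*j*L*d)"
proof -
  have e1: "ennreal (a*L) = ennreal a * ennreal L" using assms by (simp add: ennreal_mult)
  have e2: "ennreal (2*j*L*d) = 2 * ennreal j * ennreal L * ennreal d"
    using assms by (simp add: ennreal_mult ennreal_mult'')
  have "ennreal (a*L + 2*j*L*d + 2*j*L*d) = ennreal (a*L) + ennreal (2*j*L*d) + ennreal (2*j*L*d)"
    using assms by (simp add: ennreal_plus[symmetric] del: ennreal_plus)
  then show ?thesis using e1 e2 by simp
qed

lemma interaction_bound:
  fixes \<eta>0 :: "real \<Rightarrow> real" and \<nu> :: "'a::euclidean_space measure"
    and g :: "real \<Rightarrow> 'a \<Rightarrow> real" and G :: "real \<Rightarrow> 'a \<Rightarrow> 'a"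
  assumes s\<nu>: "sets \<nu> = sets borel"
    and \<eta>0nn: "\<And>t. \<eta>0 t \<ge> 0" and \<eta>0m[measurable]: "\<eta>0 \<in> borel_measurable borel"
    and L1: "set_integrable lborel {-1..1} \<eta>0"
    and adm: "admissible g G" and R: "R > 0"
    and Afin: "emeasure \<nu> {\<xi>. norm \<xi> \<le> R} < \<infinity>"
    and Jfin: "(\<integral>\<^sup>+ \<xi>. ennreal (indicator {\<xi>. norm \<xi> > R} \<xi> / (norm \<xi>)\<^sup>2) \<partial>\<nu>) < \<infinity>"
  shows "dirichlet G \<ge> 0 \<and> interaction \<eta>0 \<nu> g \<le> (2 * pi) powi (- int DIM('a)) * (LINT t:{-1..1}|lborel. \<bar>\<eta>0 t\<bar>)
      * (measure \<nu> {\<xi>. norm \<xi> \<le> R}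
         + 4 * enn2real (\<integral>\<^sup>+ \<xi>. ennreal (indicator {\<xi>. norm \<xi> > R} \<xi> / (norm \<xi>)\<^sup>2) \<partial>\<nu>) * dirichlet G)"
proof -
  from adm have W: "\<And>s. s \<in> {0..1} \<Longrightarrow> W12_with_grad (g s) (G s)"
    and g1: "\<And>s. s \<in> {0..1} \<Longrightarrow> (\<integral>x. (g s x)^2 \<partial>lborel) = 1"
    and Gpm[measurable]: "(\<lambda>(s, x). G s x) \<in> borel_measurable (lborel \<Otimes>\<^sub>M lborel)"
    and Dfin: "(\<integral>\<^sup>+ s. indicator {0..1} s * (\<integral>\<^sup>+ x. ennreal ((norm (G s x))\<^sup>2) \<partial>lborel) \<partial>lborel) < \<infinity>"
    unfolding admissible_def by auto
  define N' where "N' s = (\<integral>\<^sup>+ x. ennreal ((norm (G s x))\<^sup>2) \<partial>lborel)" for s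
  define Nr where "Nr s = (\<integral>x. (norm (G s x))\<^sup>2 \<partial>lborel)" for s
  have N'm[measurable]: "N' \<in> borel_measurable lborel"
    unfolding N'_def by (rule lborel.borel_measurable_nn_integral) measurable
  have Nrm[measurable]: "Nr \<in> borel_measurable lborel"
    unfolding Nr_def by (rule lborel.borel_measurable_lebesgue_integral) measurable
  have N'm'[measurable]: "N' \<in> borel_measurable borel" using N'm by simp
  have Nrm'[measurable]: "Nr \<in> borel_measurable borel" using Nrm by simp
  have Nr0: "Nr s \<ge> 0" for s unfolding Nr_def by simp
  have N'eq: "N' s = ennreal (Nr s)" if "s \<in> {0..1}" for s
    unfolding N'_def Nr_def using W12_facts(4)[OF W[OF that]]
    by (intro nn_integral_eq_integral) auto
  define D where "D = (\<integral>\<^sup>+ s. indicator {0..1} s * N' s \<partial>lborel)"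
  define \<phi> where "\<phi> s = indicator {0..1} s * Nr s" for s :: real
  have \<phi>m[measurable]: "\<phi> \<in> borel_measurable lborel" unfolding \<phi>_def by measurable
  have \<phi>0: "\<phi> s \<ge> 0" for s unfolding \<phi>_def using Nr0 by simp
  have \<phi>enn: "ennreal (\<phi> s) = indicator {0..1} s * N' s" for s
    unfolding \<phi>_def using N'eq by (cases "s \<in> {0..1}") auto
  have Dlt: "D < \<infinity>" using Dfin unfolding D_def N'_def .
  have \<phi>i: "integrable lborel \<phi>"
    by (rule integrableI_nonneg) (use Dlt \<phi>0 in \<open>auto simp: \<phi>enn D_def\<close>)
  have dG: "dirichlet G = (\<integral>s. \<phi> s \<partial>lborel)"
    unfolding dirichlet_def set_lebesgue_integral_def \<phi>_def Nr_def by simp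
  have Deq: "D = ennreal (dirichlet G)"
  proof -
    have "D = (\<integral>\<^sup>+ s. ennreal (\<phi> s) \<partial>lborel)" unfolding D_def \<phi>enn ..
    also have "\<dots> = ennreal (\<integral>s. \<phi> s \<partial>lborel)" by (rule nn_integral_eq_integral[OF \<phi>i]) (simp add: \<phi>0)
    finally show ?thesis unfolding dG .
  qed
  have d0: "dirichlet G \<ge> 0" unfolding dG using \<phi>0 by simp
  define L where "L = (LINT t:{-1..1}|lborel. \<bar>\<eta>0 t\<bar>)"
  define Lenn where "Lenn = (\<integral>\<^sup>+ t. ennreal (indicator {-1..1} t * \<eta>0 t) \<partial>lborel)"
  have Leq: "Lenn = ennreal L"
  proof -
    have i: "integrable lborel (\<lambda>t. indicator {-1..1} t * \<eta>0 t)"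
      using L1 unfolding set_integrable_def by simp
    have "L = (\<integral>t. indicator {-1..1} t * \<eta>0 t \<partial>lborel)"
      unfolding L_def set_lebesgue_integral_def using \<eta>0nn by simp
    then show ?thesis unfolding Lenn_def
      by (simp add: nn_integral_eq_integral[OF i] \<eta>0nn)
  qed
  have L0: "L \<ge> 0" unfolding L_def set_lebesgue_integral_def using \<eta>0nn by simp
  define A where "A = emeasure \<nu> {\<xi>. norm \<xi> \<le> R}"
  define J where "J = (\<integral>\<^sup>+ \<xi>. ennreal (indicator {\<xi>. norm \<xi> > R} \<xi> / (norm \<xi>)\<^sup>2) \<partial>\<nu>)"
  have Aeq: "A = ennreal (measure \<nu> {\<xi>. norm \<xi> \<le> R})"
    unfolding A_def using Afin by (simp add: emeasure_eq_ennreal_measure)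
  have Jeq: "J = ennreal (enn2real J)" using Jfin unfolding J_def by simp
  define X where "X s r = (\<integral>\<xi>. fourier (\<lambda>x. (g s x)^2) \<xi> * cnj (fourier (\<lambda>x. (g r x)^2) \<xi>) \<partial>\<nu>)" for s r
  have Xb: "ennreal (cmod (X s r)) \<le> A + 2 * (N' s + N' r) * J" if s: "s \<in> {0..1}" and r: "r \<in> {0..1}" for s r
  proof -
    have "ennreal (cmod (X s r)) \<le> A + ennreal (2 * (Nr s + Nr r)) * J"
      unfolding X_def A_def J_def Nr_def
      by (rule nu_bound[OF s\<nu> W[OF s] g1[OF s] W[OF r] g1[OF r] R])
    also have "ennreal (2 * (Nr s + Nr r)) = 2 * (N' s + N' r)"
      using Nr0[of s] Nr0[of r] N'eq[OF s] N'eq[OF r] by (simp add: ennreal_mult ennreal_plus)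
    finally show ?thesis .
  qed
  define E where "E s r = ennreal (indicator {0..1} s * indicator {0..1} r * \<eta>0 (s - r))" for s r :: real
  define Y where "Y s = set_lebesgue_integral lborel {0..1} (\<lambda>r. X s r * complex_of_real (\<eta>0 (s - r)))" for s
  define B where "B s r = A + 2 * (N' s + N' r) * J" for s r
  have Yb: "ennreal (cmod (Y s)) \<le> (\<integral>\<^sup>+ r. E s r * B s r \<partial>lborel)" if s: "s \<in> {0..1}" for s
  proof -
    have "ennreal (cmod (Y s)) \<le> (\<integral>\<^sup>+ r. ennreal (norm (indicator {0..1} r *\<^sub>R (X s r * complex_of_real (\<eta>0 (s - r))))) \<partial>lborel)"
      unfolding Y_def set_lebesgue_integral_def by (rule norm_integral_le_nn)
    also have "\<dots> \<le> (\<integral>\<^sup>+ r. E s r * B s r \<partial>lborel)"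
    proof (rule nn_integral_mono)
      fix r
      show "ennreal (norm (indicator {0..1} r *\<^sub>R (X s r * complex_of_real (\<eta>0 (s - r))))) \<le> E s r * B s r"
      proof (cases "r \<in> {0..1}")
        case True
        have "ennreal (norm (indicator {0..1} r *\<^sub>R (X s r * complex_of_real (\<eta>0 (s - r)))))
             = ennreal (\<eta>0 (s - r)) * ennreal (cmod (X s r))"
          using True \<eta>0nn[of "s - r"] by (simp add: norm_mult ennreal_mult[symmetric] mult.commute)
        also have "\<dots> \<le> ennreal (\<eta>0 (s - r)) * B s r"
          unfolding B_def by (intro mult_left_mono Xb[OF s True]) auto
        also have "\<dots> = E s r * B s r" unfolding E_def using s True by simp
        finally show ?thesis .
      qed simp
    qed
    finally show ?thesis .
  qed
  define I where "I = set_lebesgue_integral lborel {0..1} Y"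
  have inter: "interaction \<eta>0 \<nu> g = (2 * pi) powi (- int DIM('a)) * Re I"
    unfolding interaction_def I_def Y_def X_def ..
  have Ib: "ennreal (cmod I) \<le> (\<integral>\<^sup>+ s. (\<integral>\<^sup>+ r. E s r * B s r \<partial>lborel) \<partial>lborel)"
  proof -
    have "ennreal (cmod I) \<le> (\<integral>\<^sup>+ s. ennreal (norm (indicator {0..1} s *\<^sub>R Y s)) \<partial>lborel)"
      unfolding I_def set_lebesgue_integral_def by (rule norm_integral_le_nn)
    also have "\<dots> \<le> (\<integral>\<^sup>+ s. (\<integral>\<^sup>+ r. E s r * B s r \<partial>lborel) \<partial>lborel)"
    proof (rule nn_integral_mono)
      fix s
      show "ennreal (norm (indicator {0..1} s *\<^sub>R Y s)) \<le> (\<integral>\<^sup>+ r. E s r * B s r \<partial>lborel)"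
        using Yb[of s] by (cases "s \<in> {0..1}") auto
    qed
    finally show ?thesis .
  qed
  have Em[measurable]: "(\<lambda>(s, r). E s r) \<in> borel_measurable (lborel \<Otimes>\<^sub>M lborel)"
    unfolding E_def by measurable
  have Em1[measurable]: "E s \<in> borel_measurable lborel" for s
    unfolding E_def by measurable
  have Em2[measurable]: "(\<lambda>s. E s r) \<in> borel_measurable lborel" for r
    unfolding E_def by measurable
  have Eb_r: "(\<integral>\<^sup>+ r. E s r \<partial>lborel) \<le> indicator {0..1} s * Lenn" for s
  proof (cases "s \<in> {0..1}")
    case True
    have "(\<integral>\<^sup>+ r. E s r \<partial>lborel) = (\<integral>\<^sup>+ r. ennreal (indicator {0..1} r * \<eta>0 (s - r)) \<partial>lborel)"
      unfolding E_def using True by simp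
    also have "\<dots> \<le> Lenn" unfolding Lenn_def by (rule shift_bound_r[OF \<eta>0m True])
    finally show ?thesis using True by simp
  next
    case False then show ?thesis by (simp add: E_def)
  qed
  have Eb_s: "(\<integral>\<^sup>+ s. E s r \<partial>lborel) \<le> indicator {0..1} r * Lenn" for r
  proof (cases "r \<in> {0..1}")
    case True
    have "(\<integral>\<^sup>+ s. E s r \<partial>lborel) = (\<integral>\<^sup>+ s. ennreal (indicator {0..1} s * \<eta>0 (s - r)) \<partial>lborel)"
      unfolding E_def using True by simp
    also have "\<dots> \<le> Lenn" unfolding Lenn_def by (rule shift_bound_s[OF \<eta>0m True])
    finally show ?thesis using True by simp
  next
    case False then show ?thesis by (simp add: E_def)
  qed
  have inner: "(\<integral>\<^sup>+ r. E s r * B s r \<partial>lborel)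
      = A * (\<integral>\<^sup>+ r. E s r \<partial>lborel) + (2 * J * N' s) * (\<integral>\<^sup>+ r. E s r \<partial>lborel)
        + (\<integral>\<^sup>+ r. E s r * (2 * J * N' r) \<partial>lborel)" for s
  proof -
    have "(\<integral>\<^sup>+ r. E s r * B s r \<partial>lborel)
        = (\<integral>\<^sup>+ r. (A * E s r + (2 * J * N' s) * E s r) + E s r * (2 * J * N' r) \<partial>lborel)"
      by (intro nn_integral_cong) (simp add: B_def algebra_simps)
    also have "\<dots> = (\<integral>\<^sup>+ r. A * E s r + (2 * J * N' s) * E s r \<partial>lborel) + (\<integral>\<^sup>+ r. E s r * (2 * J * N' r) \<partial>lborel)"
      by (rule nn_integral_add) measurable
    also have "(\<integral>\<^sup>+ r. A * E s r + (2 * J * N' s) * E s r \<partial>lborel)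
        = (\<integral>\<^sup>+ r. A * E s r \<partial>lborel) + (\<integral>\<^sup>+ r. (2 * J * N' s) * E s r \<partial>lborel)"
      by (rule nn_integral_add) measurable
    finally show ?thesis by (simp add: nn_integral_cmult)
  qed
  have third: "(\<integral>\<^sup>+ s. (\<integral>\<^sup>+ r. E s r * (2 * J * N' r) \<partial>lborel) \<partial>lborel) \<le> 2 * J * Lenn * D"
  proof -
    have "(\<integral>\<^sup>+ s. (\<integral>\<^sup>+ r. E s r * (2 * J * N' r) \<partial>lborel) \<partial>lborel)
        = (\<integral>\<^sup>+ r. (\<integral>\<^sup>+ s. E s r * (2 * J * N' r) \<partial>lborel) \<partial>lborel)"
      by (rule lborel_pair.Fubini'[where f="\<lambda>r s. E s r * (2 * J * N' r)"]) measurable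
    also have "\<dots> = (\<integral>\<^sup>+ r. (2 * J * N' r) * (\<integral>\<^sup>+ s. E s r \<partial>lborel) \<partial>lborel)"
      by (intro nn_integral_cong) (simp add: nn_integral_multc mult.commute)
    also have "\<dots> \<le> (\<integral>\<^sup>+ r. (2 * J * N' r) * (indicator {0..1} r * Lenn) \<partial>lborel)"
      by (intro nn_integral_mono mult_left_mono Eb_s) simp
    also have "\<dots> = (\<integral>\<^sup>+ r. (2 * J * Lenn) * (indicator {0..1} r * N' r) \<partial>lborel)"
      by (intro nn_integral_cong) (simp add: mult_ac)
    also have "\<dots> = 2 * J * Lenn * D" unfolding D_def
      by (rule nn_integral_cmult) measurable
    finally show ?thesis .
  qed
  have T: "(\<integral>\<^sup>+ s. (\<integral>\<^sup>+ r. E s r * B s r \<partial>lborel) \<partial>lborel) \<le> A * Lenn + 2 * J * Lenn * D + 2 * J * Lenn * D"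
  proof -
    have "(\<integral>\<^sup>+ s. (\<integral>\<^sup>+ r. E s r * B s r \<partial>lborel) \<partial>lborel)
       \<le> (\<integral>\<^sup>+ s. (A * (indicator {0..1} s * Lenn) + (2 * J * N' s) * (indicator {0..1} s * Lenn))
              + (\<integral>\<^sup>+ r. E s r * (2 * J * N' r) \<partial>lborel) \<partial>lborel)"
      unfolding inner by (intro nn_integral_mono add_mono mult_left_mono Eb_r order_refl) simp_all
    also have "\<dots> = (\<integral>\<^sup>+ s. A * (indicator {0..1} s * Lenn) + (2 * J * N' s) * (indicator {0..1} s * Lenn) \<partial>lborel)
              + (\<integral>\<^sup>+ s. (\<integral>\<^sup>+ r. E s r * (2 * J * N' r) \<partial>lborel) \<partial>lborel)"
    proof (rule nn_integral_add)
      show "(\<lambda>s. A * (indicator {0..1} s * Lenn) + 2 * J * N' s * (indicator {0..1} s * Lenn)) \<in> borel_measurable lborel"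
        by measurable
      show "(\<lambda>s. \<integral>\<^sup>+ r. E s r * (2 * J * N' r) \<partial>lborel) \<in> borel_measurable lborel"
        by (rule lborel.borel_measurable_nn_integral) measurable
    qed
    also have "(\<integral>\<^sup>+ s. A * (indicator {0..1} s * Lenn) + (2 * J * N' s) * (indicator {0..1} s * Lenn) \<partial>lborel)
        = (\<integral>\<^sup>+ s. (A * Lenn) * indicator {0..1::real} s \<partial>lborel) + (\<integral>\<^sup>+ s. (2 * J * Lenn) * (indicator {0..1} s * N' s) \<partial>lborel)"
    proof -
      have "(\<integral>\<^sup>+ s. A * (indicator {0..1} s * Lenn) + (2 * J * N' s) * (indicator {0..1} s * Lenn) \<partial>lborel)
          = (\<integral>\<^sup>+ s. (A * Lenn) * indicator {0..1} s + (2 * J * Lenn) * (indicator {0..1} s * N' s) \<partial>lborel)"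
        by (intro nn_integral_cong) (simp add: mult_ac)
      also have "\<dots> = (\<integral>\<^sup>+ s. (A * Lenn) * indicator {0..1::real} s \<partial>lborel) + (\<integral>\<^sup>+ s. (2 * J * Lenn) * (indicator {0..1} s * N' s) \<partial>lborel)"
        by (rule nn_integral_add) measurable
      finally show ?thesis .
    qed
    also have "\<dots> = A * Lenn + 2 * J * Lenn * D"
      unfolding D_def by (subst nn_integral_cmult, measurable)+
    finally have a: "(\<integral>\<^sup>+ s. (\<integral>\<^sup>+ r. E s r * B s r \<partial>lborel) \<partial>lborel)
      \<le> A * Lenn + 2 * J * Lenn * D + (\<integral>\<^sup>+ s. (\<integral>\<^sup>+ r. E s r * (2 * J * N' r) \<partial>lborel) \<partial>lborel)" .
    have b: "A * Lenn + 2 * J * Lenn * D + (\<integral>\<^sup>+ s. (\<integral>\<^sup>+ r. E s r * (2 * J * N' r) \<partial>lborel) \<partial>lborel)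
      \<le> A * Lenn + 2 * J * Lenn * D + 2 * J * Lenn * D" using third by (rule add_left_mono)
    from a b show ?thesis by (rule order_trans)
  qed
  define a where "a = measure \<nu> {\<xi>. norm \<xi> \<le> R}"
  define j where "j = enn2real J"
  define d where "d = dirichlet G"
  have a0: "a \<ge> 0" and j0: "j \<ge> 0" unfolding a_def j_def by auto
  have "ennreal (cmod I) \<le> A * Lenn + 2 * J * Lenn * D + 2 * J * Lenn * D" using Ib T by (rule order_trans)
  also have "\<dots> = ennreal (a*L + 2*j*L*d + 2*j*L*d)"
  proof -
    have "A * Lenn + 2 * J * Lenn * D + 2 * J * Lenn * D
        = ennreal a * ennreal L + 2 * ennreal j * ennreal L * ennreal d + 2 * ennreal j * ennreal L * ennreal d"
      using Aeq Leq Jeq Deq unfolding a_def j_def d_def by simp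
    then show ?thesis using enn_arith[OF a0 L0 j0 d0[folded d_def]] by simp
  qed
  finally have cI: "cmod I \<le> a*L + 2*j*L*d + 2*j*L*d"
    using a0 L0 j0 d0 unfolding d_def by (subst (asm) ennreal_le_iff) (auto intro!: add_nonneg_nonneg mult_nonneg_nonneg)
  have P: "(2 * pi) powi (- int DIM('a)) > 0" by (rule zero_less_power_int) simp
  have "interaction \<eta>0 \<nu> g = (2 * pi) powi (- int DIM('a)) * Re I" by (rule inter)
  also have "\<dots> \<le> (2 * pi) powi (- int DIM('a)) * cmod I"
    using P by (intro mult_left_mono complex_Re_le_cmod) auto
  also have "\<dots> \<le> (2 * pi) powi (- int DIM('a)) * (a*L + 2*j*L*d + 2*j*L*d)"
    using P cI by (intro mult_left_mono) auto
  also have "\<dots> = (2 * pi) powi (- int DIM('a)) * L * (a + 4 * j * d)"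
    by (simp add: algebra_simps)
  finally show ?thesis using d0 unfolding a_def j_def J_def L_def d_def by simp
qed


lemma nu_meas:
  assumes s\<nu>: "sets \<nu> = sets borel" and "f \<in> borel_measurable borel"
  shows "f \<in> borel_measurable \<nu>"
  by (subst measurable_cong_sets[OF s\<nu> refl]) (rule assms)

lemma A_finite:
  fixes \<nu> :: "'a::euclidean_space measure"
  assumes s\<nu>: "sets \<nu> = sets borel" and fin: "(\<integral>\<^sup>+ \<xi>. ennreal (1 / (1 + (norm \<xi>)\<^sup>2)) \<partial>\<nu>) < \<infinity>"
  shows "emeasure \<nu> {\<xi>. norm \<xi> \<le> R} < \<infinity>"
proof -
  have S: "{\<xi>::'a. norm \<xi> \<le> R} \<in> sets \<nu>" unfolding s\<nu> by measurable
  have "emeasure \<nu> {\<xi>. norm \<xi> \<le> R} = (\<integral>\<^sup>+ \<xi>. ennreal (indicator {\<xi>. norm \<xi> \<le> R} \<xi>) \<partial>\<nu>)"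
    using S by (simp add: ennreal_indicator)
  also have "\<dots> \<le> (\<integral>\<^sup>+ \<xi>. ennreal (1 + R^2) * ennreal (1 / (1 + (norm \<xi>)\<^sup>2)) \<partial>\<nu>)"
  proof (rule nn_integral_mono)
    fix \<xi> :: 'a
    show "ennreal (indicator {\<xi>. norm \<xi> \<le> R} \<xi>) \<le> ennreal (1 + R^2) * ennreal (1 / (1 + (norm \<xi>)\<^sup>2))"
    proof (cases "norm \<xi> \<le> R")
      case True
      then have "(norm \<xi>)^2 \<le> R^2" by (intro power_mono) auto
      have pos: "1 + (norm \<xi>)^2 > 0" by (simp add: add_pos_nonneg)
      have "1 \<le> (1 + R^2) * (1 / (1 + (norm \<xi>)\<^sup>2))" using \<open>(norm \<xi>)^2 \<le> R^2\<close> pos by (simp add: le_divide_eq)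
      then have "ennreal 1 \<le> ennreal ((1 + R^2) * (1 / (1 + (norm \<xi>)\<^sup>2)))" by (rule ennreal_leI)
      also have "\<dots> = ennreal (1 + R^2) * ennreal (1 / (1 + (norm \<xi>)\<^sup>2))"
        by (rule ennreal_mult) (auto simp: add_nonneg_nonneg)
      finally show ?thesis using True by simp
    qed simp
  qed
  also have "\<dots> = ennreal (1 + R^2) * (\<integral>\<^sup>+ \<xi>. ennreal (1 / (1 + (norm \<xi>)\<^sup>2)) \<partial>\<nu>)"
    by (rule nn_integral_cmult) (rule nu_meas[OF s\<nu>], measurable)
  also have "\<dots> < \<infinity>" using fin by (simp add: ennreal_mult_less_top)
  finally show ?thesis .
qed

lemma tail_bound:
  fixes \<xi> :: "'a::euclidean_space"
  assumes R: "R > 0"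
  shows "indicator {\<xi>. norm \<xi> > R} \<xi> / (norm \<xi>)\<^sup>2 \<le> ((1 + R^2) / R^2) * (1 / (1 + (norm \<xi>)\<^sup>2))"
proof (cases "norm \<xi> > R")
  case True
  then have n: "(norm \<xi>)^2 \<ge> R^2" using R by (intro power_mono) auto
  have np: "(norm \<xi>)^2 > 0" using True R by auto
  have "R^2 * (1 + (norm \<xi>)\<^sup>2) \<le> (1 + R^2) * (norm \<xi>)^2" using n by (simp add: algebra_simps)
  then have ineq: "R^2 * (1 + (norm \<xi>)\<^sup>2) \<le> (1 + R^2) * (norm \<xi>)^2" .
  have Y: "R^2 * (1 + (norm \<xi>)\<^sup>2) > 0" using R by (simp add: add_pos_nonneg)
  have "1 / (norm \<xi>)\<^sup>2 \<le> (1 + R^2) / (R^2 * (1 + (norm \<xi>)\<^sup>2))"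
    using ineq np Y by (simp add: le_divide_eq divide_le_eq mult.commute)
  then have "1 / (norm \<xi>)\<^sup>2 \<le> ((1 + R^2) / R^2) * (1 / (1 + (norm \<xi>)\<^sup>2))" by simp
  then show ?thesis using True by simp
qed (simp add: indicator_def)

lemma J_finite:
  fixes \<nu> :: "'a::euclidean_space measure"
  assumes s\<nu>: "sets \<nu> = sets borel" and fin: "(\<integral>\<^sup>+ \<xi>. ennreal (1 / (1 + (norm \<xi>)\<^sup>2)) \<partial>\<nu>) < \<infinity>"
    and R: "R > 0"
  shows "(\<integral>\<^sup>+ \<xi>. ennreal (indicator {\<xi>. norm \<xi> > R} \<xi> / (norm \<xi>)\<^sup>2) \<partial>\<nu>) < \<infinity>"
proof -
  have "(\<integral>\<^sup>+ \<xi>. ennreal (indicator {\<xi>. norm \<xi> > R} \<xi> / (norm \<xi>)\<^sup>2) \<partial>\<nu>)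
     \<le> (\<integral>\<^sup>+ \<xi>. ennreal ((1 + R^2) / R^2) * ennreal (1 / (1 + (norm \<xi>)\<^sup>2)) \<partial>\<nu>)"
  proof (rule nn_integral_mono)
    fix \<xi> :: 'a
    have "ennreal (indicator {\<xi>. norm \<xi> > R} \<xi> / (norm \<xi>)\<^sup>2) \<le> ennreal (((1 + R^2) / R^2) * (1 / (1 + (norm \<xi>)\<^sup>2)))"
      by (rule ennreal_leI[OF tail_bound[OF R]])
    also have "\<dots> = ennreal ((1 + R^2) / R^2) * ennreal (1 / (1 + (norm \<xi>)\<^sup>2))"
      by (rule ennreal_mult) (auto simp: add_nonneg_nonneg)
    finally show "ennreal (indicator {\<xi>. norm \<xi> > R} \<xi> / (norm \<xi>)\<^sup>2) \<le> ennreal ((1 + R^2) / R^2) * ennreal (1 / (1 + (norm \<xi>)\<^sup>2))" .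
  qed
  also have "\<dots> = ennreal ((1 + R^2) / R^2) * (\<integral>\<^sup>+ \<xi>. ennreal (1 / (1 + (norm \<xi>)\<^sup>2)) \<partial>\<nu>)"
    by (rule nn_integral_cmult) (rule nu_meas[OF s\<nu>], measurable)
  also have "\<dots> < \<infinity>" using fin by (simp add: ennreal_mult_less_top)
  finally show ?thesis .
qed


lemma tail_small:
  fixes \<nu> :: "'a::euclidean_space measure"
  assumes s\<nu>: "sets \<nu> = sets borel" and fin: "(\<integral>\<^sup>+ \<xi>. ennreal (1 / (1 + (norm \<xi>)\<^sup>2)) \<partial>\<nu>) < \<infinity>"
    and K: "K \<ge> 0"
  shows "\<exists>R>0. ennreal K * (\<integral>\<^sup>+ \<xi>. ennreal (indicator {\<xi>. norm \<xi> > R} \<xi> / (norm \<xi>)\<^sup>2) \<partial>\<nu>) < ennreal (1/2)"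
proof -
  define f where "f n \<xi> = indicator {\<xi>. norm \<xi> > real (Suc n)} \<xi> / (norm \<xi>)\<^sup>2" for n and \<xi> :: 'a
  define w where "w \<xi> = 2 * (1 / (1 + (norm \<xi>)\<^sup>2))" for \<xi> :: 'a
  have wm: "w \<in> borel_measurable \<nu>" unfolding w_def by (rule nu_meas[OF s\<nu>]) measurable
  have fm: "f n \<in> borel_measurable \<nu>" for n unfolding f_def by (rule nu_meas[OF s\<nu>]) measurable
  have w0: "w \<xi> \<ge> 0" for \<xi> unfolding w_def by (simp add: add_pos_nonneg less_imp_le)
  have wi: "integrable \<nu> w"
  proof (rule integrableI_nonneg[OF wm])
    show "AE x in \<nu>. 0 \<le> w x" using w0 by simp
    have "(\<integral>\<^sup>+ x. ennreal (w x) \<partial>\<nu>) = (\<integral>\<^sup>+ x. ennreal 2 * ennreal (1 / (1 + (norm x)\<^sup>2)) \<partial>\<nu>)"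
      unfolding w_def by (intro nn_integral_cong ennreal_mult) (auto simp: add_pos_nonneg less_imp_le)
    also have "\<dots> = ennreal 2 * (\<integral>\<^sup>+ x. ennreal (1 / (1 + (norm x)\<^sup>2)) \<partial>\<nu>)"
      by (rule nn_integral_cmult) (rule nu_meas[OF s\<nu>], measurable)
    also have "\<dots> < \<infinity>" using fin by (simp add: ennreal_mult_less_top)
    finally show "(\<integral>\<^sup>+ x. ennreal (w x) \<partial>\<nu>) < \<infinity>" .
  qed
  have fb: "\<bar>f n \<xi>\<bar> \<le> w \<xi>" for n \<xi>
  proof (cases "norm \<xi> > real (Suc n)")
    case True
    then have "norm \<xi> \<ge> 1" by simp
    then have n1: "(norm \<xi>)^2 \<ge> 1" by (simp add: one_le_power)
    have "1 / (norm \<xi>)\<^sup>2 \<le> 2 / (1 + (norm \<xi>)\<^sup>2)"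
      using n1 by (simp add: divide_le_eq le_divide_eq add_pos_nonneg)
    then show ?thesis using True unfolding f_def w_def by simp
  qed (simp add: f_def w0)
  have fi: "integrable \<nu> (f n)" for n
    by (rule Bochner_Integration.integrable_bound[OF wi fm]) (use fb w0 in \<open>auto intro!: AE_I2\<close>)
  have lim: "(\<lambda>n. \<integral>\<xi>. f n \<xi> \<partial>\<nu>) \<longlonglongrightarrow> (\<integral>\<xi>. 0 \<partial>\<nu>)"
  proof (rule integral_dominated_convergence[OF _ fm wi])
    show "(\<lambda>\<xi>. 0::real) \<in> borel_measurable \<nu>" by simp
    show "AE \<xi> in \<nu>. (\<lambda>n. f n \<xi>) \<longlonglongrightarrow> 0"
    proof (rule AE_I2)
      fix \<xi> :: 'a
      obtain N where N: "real N \<ge> norm \<xi>" using real_arch_simple by blast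
      have "eventually (\<lambda>n. f n \<xi> = 0) sequentially"
        using eventually_ge_at_top[of N]
      proof eventually_elim
        case (elim n) then have "real (Suc n) \<ge> norm \<xi>" using N by simp
        then show ?case unfolding f_def by simp
      qed
      then show "(\<lambda>n. f n \<xi>) \<longlonglongrightarrow> 0" by (rule tendsto_eventually)
    qed
    show "AE \<xi> in \<nu>. norm (f n \<xi>) \<le> w \<xi>" for n using fb by auto
  qed
  then have "(\<lambda>n. K * (\<integral>\<xi>. f n \<xi> \<partial>\<nu>)) \<longlonglongrightarrow> K * 0" by (intro tendsto_intros) simp
  then have "eventually (\<lambda>n. K * (\<integral>\<xi>. f n \<xi> \<partial>\<nu>) < 1/2) sequentially"
    by (rule order_tendstoD) simp
  then obtain n where n: "K * (\<integral>\<xi>. f n \<xi> \<partial>\<nu>) < 1/2" by (auto dest: eventually_happens)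
  have f0: "f n \<xi> \<ge> 0" for \<xi> unfolding f_def by simp
  have Jeq: "(\<integral>\<^sup>+ \<xi>. ennreal (indicator {\<xi>. norm \<xi> > real (Suc n)} \<xi> / (norm \<xi>)\<^sup>2) \<partial>\<nu>) = ennreal (\<integral>\<xi>. f n \<xi> \<partial>\<nu>)"
    unfolding f_def[symmetric] by (rule nn_integral_eq_integral[OF fi]) (simp add: f0)
  have i0: "(\<integral>\<xi>. f n \<xi> \<partial>\<nu>) \<ge> 0" using f0 by simp
  have "ennreal K * ennreal (\<integral>\<xi>. f n \<xi> \<partial>\<nu>) = ennreal (K * (\<integral>\<xi>. f n \<xi> \<partial>\<nu>))"
    using K i0 by (simp add: ennreal_mult)
  also have "\<dots> < ennreal (1/2)" by (rule ennreal_lessI) (use n in auto)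
  finally show ?thesis using Jeq by (intro exI[of _ "real (Suc n)"]) auto
qed


theorem mainTheorem5:
  fixes \<eta>0 :: "real \<Rightarrow> real" and \<nu> :: "'a::euclidean_space measure"
  assumes cov: "covariance_function \<eta>0"
    and L1: "set_integrable lborel {-1..1} \<eta>0"
    and spec: "tempered_measure \<nu>"
    and fin: "(\<integral>\<^sup>+ \<xi>. ennreal (1 / (1 + (norm \<xi>)\<^sup>2)) \<partial>\<nu>) < \<infinity>"
  shows "calE \<eta>0 \<nu> < \<infinity> \<and> (\<forall>R > 0.
           ennreal ((LINT t:{-1..1}|lborel. \<bar>\<eta>0 t\<bar>) * (2 * pi) powi (- int DIM('a)) * 4 * real DIM('a))
             * (\<integral>\<^sup>+ \<xi>. ennreal (indicator {\<xi>. norm \<xi> > R} \<xi> / (norm \<xi>)\<^sup>2) \<partial>\<nu>) < ennreal (1/2) \<longrightarrow>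
           calE \<eta>0 \<nu> \<le> ereal ((LINT t:{-1..1}|lborel. \<bar>\<eta>0 t\<bar>) * (2 * pi) powi (- int DIM('a))
                                * measure \<nu> {\<xi>. norm \<xi> \<le> R}))"
proof -
  have \<eta>0nn: "\<And>t. \<eta>0 t \<ge> 0" and \<eta>0m: "\<eta>0 \<in> borel_measurable borel"
    using cov unfolding covariance_function_def locally_integrable_def by auto
  have s\<nu>: "sets \<nu> = sets borel" using spec unfolding tempered_measure_def by auto
  define L where "L = (LINT t:{-1..1}|lborel. \<bar>\<eta>0 t\<bar>)"
  define P where "P = (2 * pi) powi (- int DIM('a))"
  define l where "l = real DIM('a)"
  have L0: "L \<ge> 0" unfolding L_def set_lebesgue_integral_def by simp
  have P0: "P > 0" unfolding P_def by (rule zero_less_power_int) simp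
  have l1: "l \<ge> 1" unfolding l_def using DIM_positive[where 'a='a] by linarith
  have main: "calE \<eta>0 \<nu> \<le> ereal (L * P * measure \<nu> {\<xi>. norm \<xi> \<le> R})"
    if R: "R > 0" and cond: "ennreal (L * P * 4 * l)
             * (\<integral>\<^sup>+ \<xi>. ennreal (indicator {\<xi>. norm \<xi> > R} \<xi> / (norm \<xi>)\<^sup>2) \<partial>\<nu>) < ennreal (1/2)" for R
  proof -
    define J where "J = (\<integral>\<^sup>+ \<xi>. ennreal (indicator {\<xi>. norm \<xi> > R} \<xi> / (norm \<xi>)\<^sup>2) \<partial>\<nu>)"
    define j where "j = enn2real J"
    define a where "a = measure \<nu> {\<xi>. norm \<xi> \<le> R}"
    have Jfin: "J < \<infinity>" unfolding J_def by (rule J_finite[OF s\<nu> fin R])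
    have Afin: "emeasure \<nu> {\<xi>. norm \<xi> \<le> R} < \<infinity>" by (rule A_finite[OF s\<nu> fin])
    have Jeq: "J = ennreal j" unfolding j_def using Jfin by simp
    have j0: "j \<ge> 0" unfolding j_def by simp
    have K0: "L * P * 4 * l \<ge> 0" using L0 P0 l1 by simp
    have "ennreal (L * P * 4 * l * j) = ennreal (L * P * 4 * l) * J"
      using K0 j0 Jeq by (simp add: ennreal_mult)
    also have "\<dots> < ennreal (1/2)" using cond unfolding J_def .
    finally have c': "ennreal (L * P * 4 * l * j) < ennreal (1/2)" .
    have x0: "0 \<le> L * P * 4 * l * j" using K0 j0 by simp
    have c: "L * P * 4 * l * j < 1/2" using ennreal_less_iff[OF x0] c' by blast
    have c2: "L * P * 4 * j \<le> 1/2"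
    proof -
      have "L * P * 4 * j * 1 \<le> L * P * 4 * j * l"
        using l1 L0 P0 j0 by (intro mult_left_mono) auto
      then show ?thesis using c by (simp add: mult_ac)
    qed
    show ?thesis unfolding calE_def
    proof (rule SUP_least)
      fix gG :: "(real \<Rightarrow> 'a \<Rightarrow> real) \<times> (real \<Rightarrow> 'a \<Rightarrow> 'a)"
      assume "gG \<in> {(g, G). admissible g G}"
      then obtain g :: "real \<Rightarrow> 'a \<Rightarrow> real" and G :: "real \<Rightarrow> 'a \<Rightarrow> 'a" where gG: "gG = (g, G)" and adm: "admissible g G" by auto
      have ib: "dirichlet G \<ge> 0 \<and> interaction \<eta>0 \<nu> g \<le> P * L * (a + 4 * j * dirichlet G)"
        using interaction_bound[OF s\<nu> \<eta>0nn \<eta>0m L1 adm R Afin Jfin[unfolded J_def]]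
        unfolding P_def L_def a_def j_def J_def .
      define d where "d = dirichlet G"
      have d0: "d \<ge> 0" using ib unfolding d_def by simp
      have "interaction \<eta>0 \<nu> g - 1/2 * d \<le> P * L * a + (L * P * 4 * j) * d - 1/2 * d"
        using ib unfolding d_def by (simp add: algebra_simps)
      also have "\<dots> \<le> P * L * a + 1/2 * d - 1/2 * d"
        using mult_right_mono[OF c2 d0] by linarith
      finally have "interaction \<eta>0 \<nu> g - 1/2 * d \<le> L * P * a" by (simp add: mult_ac)
      then show "ereal (interaction \<eta>0 \<nu> (fst gG) - 1/2 * dirichlet (snd gG)) \<le> ereal (L * P * measure \<nu> {\<xi>. norm \<xi> \<le> R})"
        unfolding gG a_def d_def by simp
    qed
  qed
  have K0: "L * P * 4 * l \<ge> 0" using L0 P0 l1 by simp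
  obtain R where R: "R > 0" and cR: "ennreal (L * P * 4 * l)
             * (\<integral>\<^sup>+ \<xi>. ennreal (indicator {\<xi>. norm \<xi> > R} \<xi> / (norm \<xi>)\<^sup>2) \<partial>\<nu>) < ennreal (1/2)"
    using tail_small[OF s\<nu> fin K0] by blast
  have "calE \<eta>0 \<nu> < \<infinity>" using main[OF R cR] by (rule order_le_less_trans) simp
  moreover have "\<forall>R > 0. ennreal (L * P * 4 * l)
             * (\<integral>\<^sup>+ \<xi>. ennreal (indicator {\<xi>. norm \<xi> > R} \<xi> / (norm \<xi>)\<^sup>2) \<partial>\<nu>) < ennreal (1/2) \<longrightarrow>
           calE \<eta>0 \<nu> \<le> ereal (L * P * measure \<nu> {\<xi>. norm \<xi> \<le> R})"
    using main by blast
  ultimately show ?thesis unfolding L_def P_def l_def by blast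
qed


end
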